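(* Let $G$ be a finite group, $b$ a block of $kG$ with defect group $P$, and let $i$ be an almost source idempotent in $(kGb)^{\Delta P}$. Denote by $\mathcal{F}$ the fusion system on $P$ determined by $i$. Let $Q$, $R$ be subgroups of $P$ and denote by $e$ the unique block of $kC_G(Q)$ satisfying $\mathrm{Br}_{\Delta Q}(i)e\neq 0$. Let $\varphi:Q\to R$ be an injective group homomorphism such that ${}_\varphi kR$ is isomorphic to a direct summand of $e\,kG\,i$ as a $kQ$-$kR$-bimodule. Then $\varphi\in\mathrm{Hom}_{\mathcal{F}}(Q,R)$.
   Context: $k$ is a field of prime characteristic $p$, assumed to be a splitting field for all block algebras that arise. A block of $kG$ is a primitive idempotent $b$ of $Z(kG)$; a defect group is a maximal $p$-subgroup $P$ with $kP$ a direct summand of $kGb$ as $kP$-$kP$-bimodule. $\Delta Q=\{(u,u)\mid u\in Q\}$, and $\mathrm{Br}_{\Delta Q}:(kG)^{\Delta Q}\to kC_G(Q)$ is the Brauer homomorphism, the linear map induced by sending $x\in C_G(Q)$ to $x$ and $x\in G\setminus C_G(Q)$ to $0$. An idempotent $i\in(kGb)^{\Delta P}$ is an almost source idempotent if $\mathrm{Br}_{\Delta P}(i)\ne0$ and for each $Q\le P$ there is a unique block $e_Q$ of $kC_G(Q)$ with $\mathrm{Br}_{\Delta Q}(i)\in kC_G(Q)e_Q$. The fusion system $\mathcal{F}$ determined by $i$: for $Q,R\le P$, $\mathrm{Hom}_{\mathcal{F}}(Q,R)$ is the set of group homomorphisms $\varphi:Q\to R$ for which there is $x\in G$ with $\varphi(u)=xux^{-1}$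 for all $u\in Q$ and $xe_Qx^{-1}=e_{xQx^{-1}}$. ${}_\varphi kR$ denotes the $kQ$-$kR$-bimodule $kR$ with $Q$ acting on the left through $\varphi$. *)

theory Defs
  imports "HOL-Algebra.Algebra"
begin

text \<open>Elements of kG are functions from the group to k; the element supported on a subset H
  (a subgroup) form kH. Multiplication is convolution.\<close>

definition galg :: "('g,'b) monoid_scheme \<Rightarrow> 'g set \<Rightarrow> ('g \<Rightarrow> 'k::field) set" where
  "galg G H = {a. \<forall>x. x \<notin> H \<longrightarrow> a x = 0}"

definition conv :: "('g,'b) monoid_scheme \<Rightarrow> ('g \<Rightarrow> 'k::field) \<Rightarrow> ('g \<Rightarrow> 'k) \<Rightarrow> ('g \<Rightarrow> 'k)" where
  "conv G a c = (\<lambda>x. if x \<in> carrier G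
      then (\<Sum>y\<in>carrier G. a y * c (inv\<^bsub>G\<^esub> y \<otimes>\<^bsub>G\<^esub> x)) else 0)"

definition delta :: "'g \<Rightarrow> ('g \<Rightarrow> 'k::field)" where
  "delta g = (\<lambda>x. if x = g then 1 else 0)"

definition gadd :: "('g \<Rightarrow> 'k::field) \<Rightarrow> ('g \<Rightarrow> 'k) \<Rightarrow> ('g \<Rightarrow> 'k)" where
  "gadd a c = (\<lambda>x. a x + c x)"

definition gsmult :: "'k::field \<Rightarrow> ('g \<Rightarrow> 'k) \<Rightarrow> ('g \<Rightarrow> 'k)" where
  "gsmult t a = (\<lambda>x. t * a x)"

definition gzero :: "'g \<Rightarrow> 'k::field" where
  "gzero = (\<lambda>x. 0)"

definition gcenter :: "('g,'b) monoid_scheme \<Rightarrow> 'g set \<Rightarrow> ('g \<Rightarrow> 'k::field) set" where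
  "gcenter G H = {z \<in> galg G H. \<forall>a \<in> galg G H. conv G z a = conv G a z}"

definition is_block :: "('g,'b) monoid_scheme \<Rightarrow> 'g set \<Rightarrow> ('g \<Rightarrow> 'k::field) \<Rightarrow> bool" where
  "is_block G H b \<longleftrightarrow> b \<in> gcenter G H \<and> conv G b b = b \<and> b \<noteq> gzero \<and>
     (\<forall>c \<in> gcenter G H. conv G c c = c \<and> conv G c b = c \<longrightarrow> c = gzero \<or> c = b)"

definition centr :: "('g,'b) monoid_scheme \<Rightarrow> 'g set \<Rightarrow> 'g set" where
  "centr G Q = {x \<in> carrier G. \<forall>u \<in> Q. x \<otimes>\<^bsub>G\<^esub> u = u \<otimes>\<^bsub>G\<^esub> x}"

definition gconj :: "('g,'b) monoid_scheme \<Rightarrow> 'g \<Rightarrow> ('g \<Rightarrow> 'k::field) \<Rightarrow> ('g \<Rightarrow> 'k)" where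
  "gconj G x a = conv G (delta x) (conv G a (delta (inv\<^bsub>G\<^esub> x)))"

definition fixed_pts :: "('g,'b) monoid_scheme \<Rightarrow> 'g set \<Rightarrow> ('g \<Rightarrow> 'k::field) set" where
  "fixed_pts G Q = {a \<in> galg G (carrier G). \<forall>u \<in> Q. gconj G u a = a}"

text \<open>Brauer homomorphism Br_{\<Delta>Q} (the linear map: keep coefficients on C_G(Q), kill the rest).\<close>
definition brauer :: "('g,'b) monoid_scheme \<Rightarrow> 'g set \<Rightarrow> ('g \<Rightarrow> 'k::field) \<Rightarrow> ('g \<Rightarrow> 'k)" where
  "brauer G Q a = (\<lambda>x. if x \<in> centr G Q then a x else 0)"

definition p_subgroup :: "('g,'b) monoid_scheme \<Rightarrow> nat \<Rightarrow> 'g set \<Rightarrow> bool" where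
  "p_subgroup G p P \<longleftrightarrow> subgroup P G \<and> (\<exists>n. card P = p ^ n)"

text \<open>bimod_summand G Q R \<alpha> M \<beta> N: M and N are k-subspaces of kG, regarded as kQ-kR-bimodules with
  u \<in> Q acting on the left by multiplication with delta (\<alpha> u) on M (resp. delta (\<beta> u) on N) and
  v \<in> R acting on the right by multiplication with delta v. The predicate says that M is isomorphic
  to a direct summand of N as kQ-kR-bimodule, i.e. there are bimodule homomorphisms f : M \<rightarrow> N and
  g : N \<rightarrow> M with g \<circ> f = id on M.\<close>

definition bimod_hom :: "('g,'b) monoid_scheme \<Rightarrow> 'g set \<Rightarrow> 'g set \<Rightarrow>
    ('g \<Rightarrow> 'g) \<Rightarrow> ('g \<Rightarrow> 'k::field) set \<Rightarrow> ('g \<Rightarrow> 'g) \<Rightarrow> ('g \<Rightarrow> 'k) set \<Rightarrow>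
    (('g \<Rightarrow> 'k) \<Rightarrow> ('g \<Rightarrow> 'k)) \<Rightarrow> bool" where
  "bimod_hom G Q R \<alpha> M \<beta> N f \<longleftrightarrow>
     (\<forall>m \<in> M. f m \<in> N) \<and>
     (\<forall>m \<in> M. \<forall>m' \<in> M. f (gadd m m') = gadd (f m) (f m')) \<and>
     (\<forall>t. \<forall>m \<in> M. f (gsmult t m) = gsmult t (f m)) \<and>
     (\<forall>u \<in> Q. \<forall>m \<in> M. f (conv G (delta (\<alpha> u)) m) = conv G (delta (\<beta> u)) (f m)) \<and>
     (\<forall>v \<in> R. \<forall>m \<in> M. f (conv G m (delta v)) = conv G (f m) (delta v))"

definition bimod_summand :: "('g,'b) monoid_scheme \<Rightarrow> 'g set \<Rightarrow> 'g set \<Rightarrow>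
    ('g \<Rightarrow> 'g) \<Rightarrow> ('g \<Rightarrow> 'k::field) set \<Rightarrow> ('g \<Rightarrow> 'g) \<Rightarrow> ('g \<Rightarrow> 'k) set \<Rightarrow> bool" where
  "bimod_summand G Q R \<alpha> M \<beta> N \<longleftrightarrow>
     (\<exists>f g. bimod_hom G Q R \<alpha> M \<beta> N f \<and> bimod_hom G Q R \<beta> N \<alpha> M g \<and> (\<forall>m \<in> M. g (f m) = m))"

definition block_alg :: "('g,'b) monoid_scheme \<Rightarrow> ('g \<Rightarrow> 'k::field) \<Rightarrow> ('g \<Rightarrow> 'k) set" where
  "block_alg G b = {conv G a b | a. a \<in> galg G (carrier G)}"

definition has_kP_summand :: "('g,'b) monoid_scheme \<Rightarrow> ('g \<Rightarrow> 'k::field) \<Rightarrow> 'g set \<Rightarrow> bool" where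
  "has_kP_summand G b P \<longleftrightarrow>
     bimod_summand G P P id (galg G P :: ('g \<Rightarrow> 'k) set) id (block_alg G b)"

definition defect_group :: "('g,'b) monoid_scheme \<Rightarrow> nat \<Rightarrow> ('g \<Rightarrow> 'k::field) \<Rightarrow> 'g set \<Rightarrow> bool" where
  "defect_group G p b P \<longleftrightarrow> p_subgroup G p P \<and> has_kP_summand G b P \<and>
     (\<forall>P'. p_subgroup G p P' \<and> has_kP_summand G b P' \<and> P \<subseteq> P' \<longrightarrow> P' = P)"

definition almost_source :: "('g,'b) monoid_scheme \<Rightarrow> ('g \<Rightarrow> 'k::field) \<Rightarrow> 'g set \<Rightarrow> ('g \<Rightarrow> 'k) \<Rightarrow> bool" where
  "almost_source G b P i \<longleftrightarrow>
     i \<in> block_alg G b \<and> i \<in> fixed_pts G P \<and> conv G i i = i \<and> brauer G P i \<noteq> gzero \<and>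
     (\<forall>Q. subgroup Q G \<and> Q \<subseteq> P \<longrightarrow>
        (\<exists>!e. is_block G (centr G Q) e \<and> brauer G Q i \<in> {conv G a e | a. a \<in> galg G (centr G Q)}))"

definition eQ :: "('g,'b) monoid_scheme \<Rightarrow> ('g \<Rightarrow> 'k::field) \<Rightarrow> 'g set \<Rightarrow> ('g \<Rightarrow> 'k)" where
  "eQ G i Q = (THE e. is_block G (centr G Q) e \<and>
                 brauer G Q i \<in> {conv G a e | a. a \<in> galg G (centr G Q)})"

definition fusion_hom :: "('g,'b) monoid_scheme \<Rightarrow> ('g \<Rightarrow> 'k::field) \<Rightarrow> 'g set \<Rightarrow> 'g set \<Rightarrow> ('g \<Rightarrow> 'g) \<Rightarrow> bool" where
  "fusion_hom G i Q R \<phi> \<longleftrightarrow>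
     (\<forall>u \<in> Q. \<phi> u \<in> R) \<and> (\<forall>u \<in> Q. \<forall>v \<in> Q. \<phi> (u \<otimes>\<^bsub>G\<^esub> v) = \<phi> u \<otimes>\<^bsub>G\<^esub> \<phi> v) \<and>
     (\<exists>x \<in> carrier G. (\<forall>u \<in> Q. \<phi> u = x \<otimes>\<^bsub>G\<^esub> u \<otimes>\<^bsub>G\<^esub> inv\<^bsub>G\<^esub> x) \<and>
        gconj G x (eQ G i Q) = eQ G i ((\<lambda>u. x \<otimes>\<^bsub>G\<^esub> u \<otimes>\<^bsub>G\<^esub> inv\<^bsub>G\<^esub> x) ` Q))"

text \<open>k is a splitting field for kH: End_{kH}(S) = k for every simple kH-module S.  Every simple
  module is kH/L for a maximal left ideal L, and End_{kH}(kH/L) is given by right multiplications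
  by elements a with L a \<subseteq> L, modulo L.\<close>

definition left_ideal :: "('g,'b) monoid_scheme \<Rightarrow> 'g set \<Rightarrow> ('g \<Rightarrow> 'k::field) set \<Rightarrow> bool" where
  "left_ideal G H L \<longleftrightarrow> L \<subseteq> galg G H \<and> gzero \<in> L \<and>
     (\<forall>l \<in> L. \<forall>l' \<in> L. gadd l l' \<in> L) \<and> (\<forall>t. \<forall>l \<in> L. gsmult t l \<in> L) \<and>
     (\<forall>a \<in> galg G H. \<forall>l \<in> L. conv G a l \<in> L)"

definition max_left_ideal :: "('g,'b) monoid_scheme \<Rightarrow> 'g set \<Rightarrow> ('g \<Rightarrow> 'k::field) set \<Rightarrow> bool" where
  "max_left_ideal G H L \<longleftrightarrow> left_ideal G H L \<and> L \<noteq> galg G H \<and>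
     (\<forall>L'. left_ideal G H L' \<and> L \<subseteq> L' \<longrightarrow> L' = L \<or> L' = galg G H)"

definition splitting_field_for :: "('g,'b) monoid_scheme \<Rightarrow> 'g set \<Rightarrow> 'k::field itself \<Rightarrow> bool" where
  "splitting_field_for G H (TYPE('k)) \<longleftrightarrow>
     (\<forall>L :: ('g \<Rightarrow> 'k) set. max_left_ideal G H L \<longrightarrow>
        (\<forall>a \<in> galg G H. (\<forall>l \<in> L. conv G l a \<in> L) \<longrightarrow>
           (\<exists>t. gadd a (gsmult (- t) (delta \<one>\<^bsub>G\<^esub>)) \<in> L)))"

end

theory Submission
  imports Defs "HOL-Algebra.Group_Action" "HOL-Computational_Algebra.Primes"
begin

lemma conv_add_left: "conv G (gadd a b) c = gadd (conv G a c) (conv G b c)"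
proof (rule ext)
  fix x
  show "conv G (gadd a b) c x = gadd (conv G a c) (conv G b c) x"
    unfolding conv_def gadd_def by (simp add: distrib_right sum.distrib)
qed

lemma conv_smult_right: "conv G c (gsmult t a) = gsmult t (conv G c a)"
proof (rule ext)
  fix x
  show "conv G c (gsmult t a) x = gsmult t (conv G c a) x"
    unfolding conv_def gsmult_def by (simp add: sum_distrib_left mult.left_commute[of t])
qed

lemma conv_add_right: "conv G c (gadd a b) = gadd (conv G c a) (conv G c b)"
  by (rule ext) (simp add: conv_def gadd_def distrib_left sum.distrib)

lemma conv_smult_left: "conv G (gsmult t a) c = gsmult t (conv G a c)"
  by (rule ext) (simp add: conv_def gsmult_def sum_distrib_left mult.assoc)

lemma conv_zero_left: "conv G gzero c = gzero"
  by (rule ext) (simp add: conv_def gzero_def)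

lemma conv_zero_right: "conv G c gzero = gzero"
  by (rule ext) (simp add: conv_def gzero_def)


definition gsum :: "'x set \<Rightarrow> ('x \<Rightarrow> 'g \<Rightarrow> 'k::field) \<Rightarrow> 'g \<Rightarrow> 'k" where
  "gsum S F = (\<lambda>z. \<Sum>y\<in>S. F y z)"

lemma conv_gsum_left: "finite S \<Longrightarrow> conv G (gsum S F) c = gsum S (\<lambda>y. conv G (F y) c)"
  by (rule ext) (simp add: conv_def gsum_def sum_distrib_right sum.swap[of _ S])

lemma conv_gsum_right: "finite S \<Longrightarrow> conv G c (gsum S F) = gsum S (\<lambda>y. conv G c (F y))"
  by (rule ext) (simp add: conv_def gsum_def sum_distrib_left sum.swap[of _ S])

locale fgrp = group G for G :: "('g,'b) monoid_scheme" (structure) +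
  assumes fin: "finite (carrier G)"
begin

lemma sum_lmult: "z \<in> carrier G \<Longrightarrow> (\<Sum>y\<in>carrier G. F y) = (\<Sum>w\<in>carrier G. F (z \<otimes> w))"
proof -
  assume z: "z \<in> carrier G"
  have "(\<Sum>y\<in>carrier G. F y) = (\<Sum>y\<in>(\<lambda>w. z \<otimes> w) ` carrier G. F y)"
    using surj_const_mult[OF z] by simp
  also have "\<dots> = (\<Sum>w\<in>carrier G. F (z \<otimes> w))"
    by (rule sum.reindex[OF inj_on_cmult[OF z], unfolded comp_def])
  finally show ?thesis .
qed

lemma sum_inv: "(\<Sum>y\<in>carrier G. F y) = (\<Sum>w\<in>carrier G. F (inv w))"
proof -
  have inj: "inj_on (\<lambda>w. inv w) (carrier G)" by (metis inj_onI inv_inv)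
  have im: "(\<lambda>w. inv w) ` carrier G = carrier G"
    by (auto intro!: image_eqI[where x="inv x" for x])
  show ?thesis using sum.reindex[OF inj, of F] im by (simp add: comp_def)
qed

lemma conv_eval: "x \<in> carrier G \<Longrightarrow> conv G a c x = (\<Sum>y\<in>carrier G. a y * c (inv y \<otimes> x))"
  by (simp add: conv_def)

lemma conv_out: "x \<notin> carrier G \<Longrightarrow> conv G a c x = 0"
  by (simp add: conv_def)

lemma conv_supp: "conv G a c \<in> galg G (carrier G)"
  by (simp add: galg_def conv_def)

lemma conv_assoc: "conv G (conv G a b) c = conv G a (conv G b c)"
proof
  fix x
  show "conv G (conv G a b) c x = conv G a (conv G b c) x"
  proof (cases "x \<in> carrier G")
    case False thus ?thesis by (simp add: conv_out)
  next
    case x: True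
    have "conv G (conv G a b) c x = (\<Sum>y\<in>carrier G. (\<Sum>z\<in>carrier G. a z * b (inv z \<otimes> y)) * c (inv y \<otimes> x))"
      using x by (simp add: conv_eval)
    also have "\<dots> = (\<Sum>z\<in>carrier G. a z * (\<Sum>y\<in>carrier G. b (inv z \<otimes> y) * c (inv y \<otimes> x)))"
      by (simp only: sum_distrib_left sum_distrib_right mult.assoc) (rule sum.swap)
    also have "\<dots> = (\<Sum>z\<in>carrier G. a z * (\<Sum>w\<in>carrier G. b w * c (inv w \<otimes> (inv z \<otimes> x))))"
    proof (rule sum.cong[OF refl])
      fix z assume z: "z \<in> carrier G"
      have "(\<Sum>y\<in>carrier G. b (inv z \<otimes> y) * c (inv y \<otimes> x))
          = (\<Sum>w\<in>carrier G. b (inv z \<otimes> (z \<otimes> w)) * c (inv (z \<otimes> w) \<otimes> x))"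
        by (rule sum_lmult[OF z])
      also have "\<dots> = (\<Sum>w\<in>carrier G. b w * c (inv w \<otimes> (inv z \<otimes> x)))"
        using z x by (intro sum.cong refl) (simp add: inv_mult_group m_assoc[symmetric])
      finally show "a z * (\<Sum>y\<in>carrier G. b (inv z \<otimes> y) * c (inv y \<otimes> x)) = a z * (\<Sum>w\<in>carrier G. b w * c (inv w \<otimes> (inv z \<otimes> x)))" by simp
    qed
    also have "\<dots> = conv G a (conv G b c) x"
      using x by (simp add: conv_eval)
    finally show ?thesis .
  qed
qed

lemma conv_delta_left: "g \<in> carrier G \<Longrightarrow> conv G (delta g) c = (\<lambda>x. if x \<in> carrier G then c (inv g \<otimes> x) else 0)"
proof (rule ext)
  fix x assume g: "g \<in> carrier G"
  have "\<And>y. delta g y * c (inv y \<otimes> x) = (if y = g then c (inv g \<otimes> x) else 0)"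
    by (simp add: delta_def)
  hence "(\<Sum>y\<in>carrier G. delta g y * c (inv y \<otimes> x)) = c (inv g \<otimes> x)"
    using g fin by simp
  thus "conv G (delta g) c x = (if x \<in> carrier G then c (inv g \<otimes> x) else 0)"
    by (simp add: conv_def)
qed

lemma conv_delta_right: "g \<in> carrier G \<Longrightarrow> conv G c (delta g) = (\<lambda>x. if x \<in> carrier G then c (x \<otimes> inv g) else 0)"
proof (rule ext)
  fix x assume g: "g \<in> carrier G"
  show "conv G c (delta g) x = (if x \<in> carrier G then c (x \<otimes> inv g) else 0)"
  proof (cases "x \<in> carrier G")
    case False thus ?thesis by (simp add: conv_out)
  next
    case x: True
    have "\<And>y. y \<in> carrier G \<Longrightarrow> (inv y \<otimes> x = g) = (y = x \<otimes> inv g)"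
      using g x by (metis inv_closed inv_solve_left inv_solve_right m_closed)
    hence "conv G c (delta g) x = (\<Sum>y\<in>carrier G. if y = x \<otimes> inv g then c y else 0)"
      using x by (auto simp: conv_eval delta_def intro!: sum.cong)
    also have "\<dots> = c (x \<otimes> inv g)" using x g fin by simp
    finally show ?thesis using x by simp
  qed
qed

lemma delta_supp: "g \<in> H \<Longrightarrow> delta g \<in> galg G H"
  by (simp add: galg_def delta_def)

lemma delta_mult: "a \<in> carrier G \<Longrightarrow> b \<in> carrier G \<Longrightarrow> conv G (delta a) (delta b) = delta (a \<otimes> b)"
proof (rule ext)
  fix x assume a: "a \<in> carrier G" and b: "b \<in> carrier G"
  have "x \<in> carrier G \<Longrightarrow> (inv a \<otimes> x = b) = (x = a \<otimes> b)"
    using a b by (metis inv_solve_left m_closed)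
  thus "conv G (delta a) (delta b) x = delta (a \<otimes> b) x"
    unfolding conv_delta_left[OF a] using a b by (auto simp: delta_def)
qed

lemma unit_left: "a \<in> galg G (carrier G) \<Longrightarrow> conv G (delta \<one>) a = a"
  by (rule ext) (auto simp: conv_delta_left galg_def)

lemma unit_right: "a \<in> galg G (carrier G) \<Longrightarrow> conv G a (delta \<one>) = a"
  by (rule ext) (auto simp: conv_delta_right galg_def)

lemma galg_conv: "subgroup H G \<Longrightarrow> a \<in> galg G H \<Longrightarrow> c \<in> galg G H \<Longrightarrow> conv G a c \<in> galg G H"
proof -
  assume H: "subgroup H G" and a: "a \<in> galg G H" and c: "c \<in> galg G H"
  show ?thesis unfolding galg_def
  proof (intro CollectI allI impI)
    fix x assume xH: "x \<notin> H"
    show "conv G a c x = 0"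
    proof (cases "x \<in> carrier G")
      case False thus ?thesis by (simp add: conv_out)
    next
      case x: True
      have "\<And>y. y \<in> carrier G \<Longrightarrow> a y * c (inv y \<otimes> x) = 0"
      proof -
        fix y assume y: "y \<in> carrier G"
        show "a y * c (inv y \<otimes> x) = 0"
        proof (cases "y \<in> H")
          case False thus ?thesis using a by (simp add: galg_def)
        next
          case True
          have "inv y \<otimes> x \<notin> H"
          proof
            assume "inv y \<otimes> x \<in> H"
            hence "y \<otimes> (inv y \<otimes> x) \<in> H" by (rule subgroup.m_closed[OF H True])
            thus False using xH y x by (simp add: m_assoc[symmetric])
          qed
          thus ?thesis using c by (simp add: galg_def)
        qed
      qed
      hence "(\<Sum>y\<in>carrier G. a y * c (inv y \<otimes> x)) = 0" by (simp add: sum.neutral)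
      thus ?thesis using x by (simp add: conv_eval)
    qed
  qed
qed

lemma galg_mono: "H \<subseteq> K \<Longrightarrow> a \<in> galg G H \<Longrightarrow> a \<in> galg G K"
  by (auto simp: galg_def)


lemma decomp: "a \<in> galg G (carrier G) \<Longrightarrow> a = gsum (carrier G) (\<lambda>y. gsmult (a y) (delta y))"
proof (rule ext)
  fix z assume a: "a \<in> galg G (carrier G)"
  show "a z = gsum (carrier G) (\<lambda>y. gsmult (a y) (delta y)) z"
  proof -
    have "\<And>y. a y * delta y z = (if y = z then a z else 0)" by (simp add: delta_def)
    thus ?thesis using a fin by (cases "z \<in> carrier G") (auto simp: gsum_def gsmult_def galg_def)
  qed
qed


end

definition conjset :: "('g,'b) monoid_scheme \<Rightarrow> 'g \<Rightarrow> 'g set \<Rightarrow> 'g set" where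
  "conjset G x H = (\<lambda>u. x \<otimes>\<^bsub>G\<^esub> u \<otimes>\<^bsub>G\<^esub> inv\<^bsub>G\<^esub> x) ` H"

context fgrp
begin

lemma lcan1 [simp]: "x \<in> carrier G \<Longrightarrow> p \<in> carrier G \<Longrightarrow> inv x \<otimes> (x \<otimes> p) = p"
  by (simp add: m_assoc[symmetric])

lemma lcan2 [simp]: "x \<in> carrier G \<Longrightarrow> p \<in> carrier G \<Longrightarrow> x \<otimes> (inv x \<otimes> p) = p"
  by (simp add: m_assoc[symmetric])

lemma cj_cancel: "x \<in> carrier G \<Longrightarrow> p \<in> carrier G \<Longrightarrow> inv x \<otimes> (x \<otimes> p \<otimes> inv x) \<otimes> x = p"
  by (simp add: m_assoc)

lemma cj_cancel': "x \<in> carrier G \<Longrightarrow> p \<in> carrier G \<Longrightarrow> x \<otimes> (inv x \<otimes> p \<otimes> x) \<otimes> inv x = p"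
  by (simp add: m_assoc)

lemma gconj_eval: "x \<in> carrier G \<Longrightarrow> gconj G x a = (\<lambda>z. if z \<in> carrier G then a (inv x \<otimes> z \<otimes> x) else 0)"
  by (rule ext) (simp add: gconj_def conv_delta_left conv_delta_right m_assoc)

lemma gconj_supp: "gconj G x a \<in> galg G (carrier G)"
  by (simp add: gconj_def conv_supp)

lemma gconj_inv1: "x \<in> carrier G \<Longrightarrow> a \<in> galg G (carrier G) \<Longrightarrow> gconj G (inv x) (gconj G x a) = a"
  by (rule ext) (auto simp: gconj_eval galg_def m_assoc)

lemma gconj_inv2: "x \<in> carrier G \<Longrightarrow> a \<in> galg G (carrier G) \<Longrightarrow> gconj G x (gconj G (inv x) a) = a"
  by (rule ext) (auto simp: gconj_eval galg_def m_assoc)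

lemma gconj_zero: "gconj G x gzero = gzero"
  by (simp add: gconj_def conv_zero_left conv_zero_right)

lemma gconj_mult: "x \<in> carrier G \<Longrightarrow> a \<in> galg G (carrier G) \<Longrightarrow>
   gconj G x (conv G a b) = conv G (gconj G x a) (gconj G x b)"
proof -
  assume x: "x \<in> carrier G" and a: "a \<in> galg G (carrier G)"
  have "conv G (gconj G x a) (gconj G x b)
      = conv G (delta x) (conv G a (conv G (conv G (delta (inv x)) (delta x)) (conv G b (delta (inv x)))))"
    by (simp add: gconj_def conv_assoc)
  also have "\<dots> = conv G (delta x) (conv G (conv G a (delta \<one>)) (conv G b (delta (inv x))))"
    using x by (simp add: delta_mult conv_assoc)
  also have "\<dots> = gconj G x (conv G a b)"
    using a by (simp add: unit_right gconj_def conv_assoc)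
  finally show ?thesis by simp
qed

lemma gconj_delta_comm: "x \<in> carrier G \<Longrightarrow> a \<in> galg G (carrier G) \<Longrightarrow> gconj G x a = a \<Longrightarrow>
   conv G (delta x) a = conv G a (delta x)"
proof -
  assume x: "x \<in> carrier G" and a: "a \<in> galg G (carrier G)" and g: "gconj G x a = a"
  have "conv G a (delta x) = conv G (gconj G x a) (delta x)" using g by simp
  also have "\<dots> = conv G (delta x) (conv G a (conv G (delta (inv x)) (delta x)))"
    by (simp add: gconj_def conv_assoc)
  also have "\<dots> = conv G (delta x) a" using x a by (simp add: delta_mult unit_right)
  finally show ?thesis by simp
qed

lemma conjset_sub: "x \<in> carrier G \<Longrightarrow> H \<subseteq> carrier G \<Longrightarrow> conjset G x H \<subseteq> carrier G"
  by (auto simp: conjset_def)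

lemma conjset_mem: "x \<in> carrier G \<Longrightarrow> H \<subseteq> carrier G \<Longrightarrow> z \<in> carrier G \<Longrightarrow>
    (z \<in> conjset G x H) = (inv x \<otimes> z \<otimes> x \<in> H)"
proof
  assume x: "x \<in> carrier G" and H: "H \<subseteq> carrier G" and z: "z \<in> carrier G"
  { assume "z \<in> conjset G x H"
    then obtain h where "h \<in> H" "z = x \<otimes> h \<otimes> inv x" by (auto simp: conjset_def)
    thus "inv x \<otimes> z \<otimes> x \<in> H" using x H by (auto simp: m_assoc) }
  { assume "inv x \<otimes> z \<otimes> x \<in> H"
    moreover have "z = x \<otimes> (inv x \<otimes> z \<otimes> x) \<otimes> inv x" using x z by (simp add: m_assoc)
    ultimately show "z \<in> conjset G x H" unfolding conjset_def by blast }
qed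

lemma conjset_inv: "x \<in> carrier G \<Longrightarrow> H \<subseteq> carrier G \<Longrightarrow> conjset G (inv x) (conjset G x H) = H"
proof -
  assume x: "x \<in> carrier G" and H: "H \<subseteq> carrier G"
  have S: "conjset G x H \<subseteq> carrier G" by (rule conjset_sub[OF x H])
  show ?thesis
  proof (rule Set.set_eqI)
    fix z
    show "(z \<in> conjset G (inv x) (conjset G x H)) = (z \<in> H)"
    proof (cases "z \<in> carrier G")
      case False thus ?thesis using conjset_sub[OF inv_closed[OF x] S] H by auto
    next
      case z: True
      have "(z \<in> conjset G (inv x) (conjset G x H)) = (x \<otimes> z \<otimes> inv x \<in> conjset G x H)"
        using conjset_mem[OF inv_closed[OF x] S z] x by simp
      also have "\<dots> = (z \<in> H)" using conjset_mem[OF x H] x z by (simp add: m_assoc)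
      finally show ?thesis .
    qed
  qed
qed

lemma subgroup_conjset: "x \<in> carrier G \<Longrightarrow> subgroup H G \<Longrightarrow> subgroup (conjset G x H) G"
proof -
  assume x: "x \<in> carrier G" and H: "subgroup H G"
  have Hc: "H \<subseteq> carrier G" using H subgroup.subset by blast
  show ?thesis
  proof (rule subgroupI)
    show "conjset G x H \<subseteq> carrier G" by (rule conjset_sub[OF x Hc])
    show "conjset G x H \<noteq> {}" using subgroup.one_closed[OF H] by (auto simp: conjset_def)
  next
    fix a assume "a \<in> conjset G x H"
    then obtain h where h: "h \<in> H" "a = x \<otimes> h \<otimes> inv x" by (auto simp: conjset_def)
    have hc: "h \<in> carrier G" using h Hc by auto
    have "inv a = x \<otimes> inv h \<otimes> inv x" using h(2) x hc by (simp add: inv_mult_group m_assoc)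
    thus "inv a \<in> conjset G x H" using subgroup.m_inv_closed[OF H h(1)] by (auto simp: conjset_def)
  next
    fix a b assume "a \<in> conjset G x H" "b \<in> conjset G x H"
    then obtain h k where h: "h \<in> H" "a = x \<otimes> h \<otimes> inv x" and k: "k \<in> H" "b = x \<otimes> k \<otimes> inv x"
      by (auto simp: conjset_def)
    have hc: "h \<in> carrier G" "k \<in> carrier G" using h k Hc by auto
    have "a \<otimes> b = x \<otimes> (h \<otimes> k) \<otimes> inv x" using h(2) k(2) x hc by (simp add: m_assoc)
    thus "a \<otimes> b \<in> conjset G x H" using subgroup.m_closed[OF H h(1) k(1)] by (auto simp: conjset_def)
  qed
qed

lemma cj_comm: "x \<in> carrier G \<Longrightarrow> w \<in> carrier G \<Longrightarrow> u \<in> carrier G \<Longrightarrow>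
   ((x \<otimes> w \<otimes> inv x) \<otimes> (x \<otimes> u \<otimes> inv x) = (x \<otimes> u \<otimes> inv x) \<otimes> (x \<otimes> w \<otimes> inv x)) = (w \<otimes> u = u \<otimes> w)"
proof -
  assume x: "x \<in> carrier G" and w: "w \<in> carrier G" and u: "u \<in> carrier G"
  have e1: "(x \<otimes> w \<otimes> inv x) \<otimes> (x \<otimes> u \<otimes> inv x) = x \<otimes> (w \<otimes> u) \<otimes> inv x" using x w u by (simp add: m_assoc)
  have e2: "(x \<otimes> u \<otimes> inv x) \<otimes> (x \<otimes> w \<otimes> inv x) = x \<otimes> (u \<otimes> w) \<otimes> inv x" using x w u by (simp add: m_assoc)
  show ?thesis unfolding e1 e2 using x w u by (metis cj_cancel m_closed)
qed

lemma centr_conjset: assumes x: "x \<in> carrier G" and Q: "Q \<subseteq> carrier G" shows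
   "centr G (conjset G x Q) = conjset G x (centr G Q)"
proof (rule Set.set_eqI)
  fix z
  have C: "centr G Q \<subseteq> carrier G" by (auto simp: centr_def)
  show "(z \<in> centr G (conjset G x Q)) = (z \<in> conjset G x (centr G Q))"
  proof (cases "z \<in> carrier G")
    case False thus ?thesis using conjset_sub[OF x C] by (auto simp: centr_def)
  next
    case z: True
    define w where "w = inv x \<otimes> z \<otimes> x"
    have w: "w \<in> carrier G" using x z by (simp add: w_def)
    have zw: "z = x \<otimes> w \<otimes> inv x" using x z by (simp add: w_def m_assoc)
    have "(z \<in> centr G (conjset G x Q)) = (\<forall>u\<in>Q. z \<otimes> (x \<otimes> u \<otimes> inv x) = (x \<otimes> u \<otimes> inv x) \<otimes> z)"
      using z by (auto simp: centr_def conjset_def)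
    also have "\<dots> = (\<forall>u\<in>Q. w \<otimes> u = u \<otimes> w)"
      unfolding zw using cj_comm[OF x w] Q by auto
    also have "\<dots> = (w \<in> centr G Q)" using w by (simp add: centr_def)
    also have "\<dots> = (z \<in> conjset G x (centr G Q))" using conjset_mem[OF x C z] by (simp add: w_def)
    finally show ?thesis .
  qed
qed

lemma gconj_galg: "x \<in> carrier G \<Longrightarrow> H \<subseteq> carrier G \<Longrightarrow> a \<in> galg G H \<Longrightarrow> gconj G x a \<in> galg G (conjset G x H)"
  by (auto simp: galg_def gconj_eval conjset_mem)

lemma brauer_gconj: assumes x: "x \<in> carrier G" and Q: "Q \<subseteq> carrier G" shows
   "gconj G x (brauer G Q a) = brauer G (conjset G x Q) (gconj G x a)"
proof (rule ext)
  fix z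
  have C: "centr G Q \<subseteq> carrier G" by (auto simp: centr_def)
  show "gconj G x (brauer G Q a) z = brauer G (conjset G x Q) (gconj G x a) z"
  proof (cases "z \<in> carrier G")
    case False thus ?thesis using x by (simp add: gconj_eval brauer_def centr_def)
  next
    case z: True
    show ?thesis using x z conjset_mem[OF x C z]
      by (simp add: gconj_eval brauer_def centr_conjset[OF x Q])
  qed
qed

lemma brauer_supp: "brauer G Q a \<in> galg G (centr G Q)"
  by (simp add: brauer_def galg_def)

end

context fgrp
begin

lemma center_galg: "z \<in> gcenter G H \<Longrightarrow> z \<in> galg G H"
  by (simp add: gcenter_def)

lemma center_comm: "z \<in> gcenter G H \<Longrightarrow> a \<in> galg G H \<Longrightarrow> conv G z a = conv G a z"
  by (simp add: gcenter_def)

lemma block_orth: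
  fixes e1 e2 :: "'g \<Rightarrow> 'k::field"
  assumes H: "subgroup H G" and b1: "is_block G H e1" and b2: "is_block G H e2"
    and nz: "conv G e1 e2 \<noteq> gzero"
  shows "e1 = e2"
proof -
  have c1: "e1 \<in> gcenter G H" and c2: "e2 \<in> gcenter G H" using b1 b2 by (auto simp: is_block_def)
  have g1: "e1 \<in> galg G H" and g2: "e2 \<in> galg G H" using c1 c2 center_galg by auto
  have i1: "conv G e1 e1 = e1" and i2: "conv G e2 e2 = e2" using b1 b2 by (auto simp: is_block_def)
  have comm: "conv G e2 e1 = conv G e1 e2" using center_comm[OF c2 g1] .
  define z where "z = conv G e1 e2"
  have zg: "z \<in> galg G H" unfolding z_def by (rule galg_conv[OF H g1 g2])
  have zc: "z \<in> gcenter G H"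
    unfolding gcenter_def
  proof (intro CollectI conjI ballI zg)
    fix a :: "'g \<Rightarrow> 'k" assume a: "a \<in> galg G H"
    have "conv G z a = conv G e1 (conv G a e2)" by (simp add: z_def conv_assoc center_comm[OF c2 a])
    also have "\<dots> = conv G (conv G a e1) e2" by (simp add: conv_assoc[symmetric] center_comm[OF c1 a])
    finally show "conv G z a = conv G a z" by (simp add: z_def conv_assoc)
  qed
  have zz: "conv G z z = z"
  proof -
    have "conv G z z = conv G e1 (conv G (conv G e2 e1) e2)" by (simp add: z_def conv_assoc)
    also have "\<dots> = conv G (conv G e1 e1) (conv G e2 e2)" by (simp add: comm conv_assoc)
    finally show ?thesis by (simp add: i1 i2 z_def)
  qed
  have z2: "conv G z e2 = z" by (simp add: z_def conv_assoc i2)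
  have z1: "conv G z e1 = z"
  proof -
    have "conv G z e1 = conv G e1 (conv G e2 e1)" by (simp add: z_def conv_assoc)
    also have "\<dots> = z" by (simp add: comm conv_assoc[symmetric] i1 z_def)
    finally show ?thesis .
  qed
  have "z = gzero \<or> z = e2" using b2 zc zz z2 by (auto simp: is_block_def)
  hence r2: "z = e2" using nz z_def by auto
  have "z = gzero \<or> z = e1" using b1 zc zz z1 by (auto simp: is_block_def)
  hence "z = e1" using nz z_def by auto
  thus ?thesis using r2 by simp
qed

lemma conj_block:
  fixes e :: "'g \<Rightarrow> 'k::field"
  assumes x: "x \<in> carrier G" and H: "subgroup H G" and b: "is_block G H e"
  shows "is_block G (conjset G x H) (gconj G x e)"
proof -
  have Hc: "H \<subseteq> carrier G" using H subgroup.subset by blast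
  define HH where "HH = conjset G x H"
  have HHc: "HH \<subseteq> carrier G" unfolding HH_def by (rule conjset_sub[OF x Hc])
  have hback: "conjset G (inv x) HH = H" unfolding HH_def by (rule conjset_inv[OF x Hc])
  have toH: "\<And>a. a \<in> galg G HH \<Longrightarrow> gconj G (inv x) a \<in> galg G H"
    using gconj_galg[OF inv_closed[OF x] HHc] hback by simp
  have toHH: "\<And>a. a \<in> galg G H \<Longrightarrow> gconj G x a \<in> galg G HH"
    using gconj_galg[OF x Hc] HH_def by simp
  have supH: "\<And>a. a \<in> galg G H \<Longrightarrow> a \<in> galg G (carrier G)" using galg_mono[OF Hc] .
  have supHH: "\<And>a. a \<in> galg G HH \<Longrightarrow> a \<in> galg G (carrier G)" using galg_mono[OF HHc] .
  have ec: "e \<in> gcenter G H" and ee: "conv G e e = e" and enz: "e \<noteq> gzero"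
    and prim: "\<And>c. c \<in> gcenter G H \<Longrightarrow> conv G c c = c \<Longrightarrow> conv G c e = c \<Longrightarrow> c = gzero \<or> c = e"
    using b by (auto simp: is_block_def)
  have eg: "e \<in> galg G H" using center_galg[OF ec] .
  have e'c: "gconj G x e \<in> gcenter G HH"
    unfolding gcenter_def
  proof (intro CollectI conjI ballI toHH[OF eg])
    fix a :: "'g \<Rightarrow> 'k" assume a: "a \<in> galg G HH"
    have a'': "gconj G (inv x) a \<in> galg G H" by (rule toH[OF a])
    have aa: "a = gconj G x (gconj G (inv x) a)" using gconj_inv2[OF x supHH[OF a]] by simp
    have "conv G (gconj G x e) a = gconj G x (conv G e (gconj G (inv x) a))"
      by (subst aa, rule gconj_mult[OF x supH[OF eg], symmetric])
    also have "\<dots> = gconj G x (conv G (gconj G (inv x) a) e)" using center_comm[OF ec a''] by simp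
    also have "\<dots> = conv G a (gconj G x e)"
      by (subst (2) aa, rule gconj_mult[OF x supH[OF a'']])
    finally show "conv G (gconj G x e) a = conv G a (gconj G x e)" .
  qed
  have e'e': "conv G (gconj G x e) (gconj G x e) = gconj G x e"
    using gconj_mult[OF x supH[OF eg], of e] ee by simp
  have e'nz: "gconj G x e \<noteq> gzero"
  proof
    assume "gconj G x e = gzero"
    hence "gconj G (inv x) (gconj G x e) = gzero" by (simp add: gconj_zero)
    thus False using gconj_inv1[OF x supH[OF eg]] enz by simp
  qed
  have e'prim: "\<forall>c\<in>gcenter G HH. conv G c c = c \<and> conv G c (gconj G x e) = c \<longrightarrow> c = gzero \<or> c = gconj G x e"
  proof (intro ballI impI)
    fix c assume cc: "c \<in> gcenter G HH" and h: "conv G c c = c \<and> conv G c (gconj G x e) = c"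
    have cg: "c \<in> galg G HH" using center_galg[OF cc] .
    define c'' where "c'' = gconj G (inv x) c"
    have c''g: "c'' \<in> galg G H" unfolding c''_def by (rule toH[OF cg])
    have xi: "inv x \<in> carrier G" using x by simp
    have c''c: "c'' \<in> gcenter G H"
      unfolding gcenter_def
    proof (intro CollectI conjI ballI c''g)
      fix a :: "'g \<Rightarrow> 'k" assume a: "a \<in> galg G H"
      have aa: "a = gconj G (inv x) (gconj G x a)" using gconj_inv1[OF x supH[OF a]] by simp
      have "conv G c'' a = gconj G (inv x) (conv G c (gconj G x a))"
        unfolding c''_def by (subst aa, rule gconj_mult[OF xi supHH[OF cg], symmetric])
      also have "\<dots> = gconj G (inv x) (conv G (gconj G x a) c)" using center_comm[OF cc toHH[OF a]] by simp
      also have "\<dots> = conv G a c''"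
        unfolding c''_def by (subst (2) aa, rule gconj_mult[OF xi gconj_supp])
      finally show "conv G c'' a = conv G a c''" .
    qed
    have "conv G c'' c'' = c''" unfolding c''_def
      using gconj_mult[OF xi supHH[OF cg], of c] h by simp
    moreover have "conv G c'' e = c''"
    proof -
      have "conv G c'' e = conv G c'' (gconj G (inv x) (gconj G x e))"
        using gconj_inv1[OF x supH[OF eg]] by simp
      also have "\<dots> = gconj G (inv x) (conv G c (gconj G x e))"
        unfolding c''_def by (rule gconj_mult[OF xi supHH[OF cg], symmetric])
      finally show ?thesis using h c''_def by simp
    qed
    ultimately have "c'' = gzero \<or> c'' = e" using prim c''c by blast
    moreover have "c = gconj G x c''" unfolding c''_def using gconj_inv2[OF x supHH[OF cg]] by simp
    ultimately show "c = gzero \<or> c = gconj G x e" by (auto simp: gconj_zero)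
  qed
  show ?thesis unfolding is_block_def HH_def[symmetric]
    using e'c e'e' e'nz e'prim by blast
qed

end

lemma orbit_sum_mod_p:
  fixes H :: "('g,'c) monoid_scheme" (structure) and E :: "'a set"
    and act :: "'g \<Rightarrow> 'a \<Rightarrow> 'a" and h :: "'a \<Rightarrow> 'k::field"
  assumes grp: "group H" and finX: "finite E" and p: "Factorial_Ring.prime p" and ch: "CHAR('k) = p"
    and ord: "order H dvd p ^ n"
    and closed: "\<And>u x. u \<in> carrier H \<Longrightarrow> x \<in> E \<Longrightarrow> act u x \<in> E"
    and one: "\<And>x. x \<in> E \<Longrightarrow> act \<one> x = x"
    and comp: "\<And>u v x. u \<in> carrier H \<Longrightarrow> v \<in> carrier H \<Longrightarrow> x \<in> E \<Longrightarrow> act (u \<otimes> v) x = act u (act v x)"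
    and hinv: "\<And>u x. u \<in> carrier H \<Longrightarrow> x \<in> E \<Longrightarrow> h (act u x) = h x"
  shows "(\<Sum>x\<in>E. h x) = (\<Sum>x\<in>{x\<in>E. \<forall>u\<in>carrier H. act u x = x}. h x)"
proof -
  interpret H: group H by (rule grp)
  define F where "F = {x\<in>E. \<forall>u\<in>carrier H. act u x = x}"
  define \<phi> where "\<phi> = (\<lambda>u. \<lambda>x\<in>E. act u x)"
  have bk1: "\<And>u x. u \<in> carrier H \<Longrightarrow> x \<in> E \<Longrightarrow> act (inv u) (act u x) = x"
    using comp one by (metis H.inv_closed H.l_inv)
  have bk2: "\<And>u x. u \<in> carrier H \<Longrightarrow> x \<in> E \<Longrightarrow> act u (act (inv u) x) = x"
    using comp one by (metis H.inv_closed H.r_inv)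
  have bij: "\<And>u. u \<in> carrier H \<Longrightarrow> \<phi> u \<in> carrier (BijGroup E)"
  proof -
    fix u assume u: "u \<in> carrier H"
    have "bij_betw (\<phi> u) E E"
    proof (rule bij_betwI[where g="\<phi> (inv u)"])
      show "\<phi> u \<in> E \<rightarrow> E" using closed u by (auto simp: \<phi>_def)
      show "\<phi> (inv u) \<in> E \<rightarrow> E" using closed u by (auto simp: \<phi>_def)
      show "\<And>x. x \<in> E \<Longrightarrow> \<phi> (inv u) (\<phi> u x) = x" using bk1 closed u by (simp add: \<phi>_def)
      show "\<And>x. x \<in> E \<Longrightarrow> \<phi> u (\<phi> (inv u) x) = x" using bk2 closed u by (simp add: \<phi>_def)
    qed
    thus "\<phi> u \<in> carrier (BijGroup E)" by (simp add: BijGroup_def Bij_def \<phi>_def)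
  qed
  have GA: "group_action H E \<phi>"
    unfolding group_action_def group_hom_def group_hom_axioms_def
  proof (intro conjI grp group_BijGroup)
    show "\<phi> \<in> hom H (BijGroup E)"
    proof (rule homI)
      show "\<And>u. u \<in> carrier H \<Longrightarrow> \<phi> u \<in> carrier (BijGroup E)" by (rule bij)
      fix u v assume u: "u \<in> carrier H" and v: "v \<in> carrier H"
      show "\<phi> (u \<otimes> v) = \<phi> u \<otimes>\<^bsub>BijGroup E\<^esub> \<phi> v"
        using bij[OF u] bij[OF v] comp[OF u v] closed v
        by (auto simp: BijGroup_def \<phi>_def compose_def intro!: ext)
    qed
  qed
  interpret GA: group_action H E \<phi> by (rule GA)
  have orb_eq: "\<And>x. x \<in> E \<Longrightarrow> orbit H \<phi> x = (\<lambda>u. act u x) ` carrier H"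
    by (auto simp: orbit_def \<phi>_def)
  define h' where "h' x = (if x \<in> F then h x else 0)" for x
  have "(\<Sum>x\<in>E. h x) = (\<Sum>orb\<in>orbits H E \<phi>. \<Sum>x\<in>orb. h x)"
    using GA.disjoint_sum[OF finX, of h] by simp
  also have "\<dots> = (\<Sum>orb\<in>orbits H E \<phi>. \<Sum>x\<in>orb. h' x)"
  proof (rule sum.cong[OF refl])
    fix orb assume "orb \<in> orbits H E \<phi>"
    then obtain x0 where x0: "x0 \<in> E" and orb: "orb = orbit H \<phi> x0" by (auto simp: orbits_def)
    have orbX: "orb \<subseteq> E" using orb_eq[OF x0] closed x0 orb by auto
    have finO: "finite orb" using finite_subset[OF orbX finX] .
    have x0o: "x0 \<in> orb" using GA.orbit_refl[OF x0] orb by simp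
    have hconst: "\<And>y. y \<in> orb \<Longrightarrow> h y = h x0" using orb_eq[OF x0] orb hinv x0 by auto
    show "(\<Sum>x\<in>orb. h x) = (\<Sum>x\<in>orb. h' x)"
    proof (cases "x0 \<in> F")
      case True
      hence "orb = {x0}" using orb_eq[OF x0] orb by (auto simp: F_def)
      thus ?thesis using True by (simp add: h'_def)
    next
      case False
      have nf: "\<And>y. y \<in> orb \<Longrightarrow> y \<notin> F"
      proof
        fix y assume yo: "y \<in> orb" and yF: "y \<in> F"
        then obtain g where g: "g \<in> carrier H" "y = act g x0" using orb_eq[OF x0] orb by auto
        have "x0 = act (inv g) y" using bk1[OF g(1) x0] g by simp
        also have "\<dots> = y" using yF g(1) by (auto simp: F_def)
        finally show False using False yF by simp
      qed
      hence r: "(\<Sum>x\<in>orb. h' x) = 0" by (simp add: h'_def)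
      have "card orb \<noteq> 1"
      proof
        assume "card orb = 1"
        then obtain y where "orb = {y}" by (auto simp: card_1_singleton_iff)
        hence "orb = {x0}" using x0o by simp
        hence "x0 \<in> F" using orb_eq[OF x0] orb x0 by (auto simp: F_def)
        thus False using False by simp
      qed
      moreover have "card orb dvd p ^ n"
        using GA.orbit_stabilizer_theorem[OF x0] ord orb by (metis dvd_triv_left dvd_trans)
      ultimately have "p dvd card orb"
        using p by (metis divides_primepow_nat dvd_power le_zero_eq neq0_conv power_0 prime_gt_1_nat not_one_le_zero)
      hence "of_nat (card orb) = (0::'k)" using ch by (simp add: of_nat_eq_0_iff_char_dvd)
      moreover have "(\<Sum>x\<in>orb. h x) = of_nat (card orb) * h x0" using hconst by simp
      ultimately show ?thesis using r by simp
    qed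
  qed
  also have "\<dots> = (\<Sum>x\<in>E. h' x)" using GA.disjoint_sum[OF finX, of h'] by simp
  also have "\<dots> = (\<Sum>x\<in>F. h x)"
  proof -
    have "F \<subseteq> E" by (auto simp: F_def)
    hence "(\<Sum>x\<in>E. h' x) = (\<Sum>x\<in>F. h' x)"
      using finX by (intro sum.mono_neutral_right) (auto simp: h'_def)
    thus ?thesis by (simp add: h'_def)
  qed
  finally show ?thesis by (simp add: F_def)
qed

lemma eQ_spec:
  assumes "\<exists>!e. is_block G (centr G Q) e \<and> brauer G Q i \<in> {conv G a e |a. a \<in> galg G (centr G Q)}"
  shows "is_block G (centr G Q) (eQ G i Q) \<and> brauer G Q i \<in> {conv G a (eQ G i Q) |a. a \<in> galg G (centr G Q)}"
  unfolding eQ_def by (rule theI'[OF assms])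

lemma eQ_unique:
  fixes e i :: "'g \<Rightarrow> 'k::field"
  assumes "\<exists>!e. is_block G (centr G Q) e \<and> brauer G Q i \<in> {conv G a e |a. a \<in> galg G (centr G Q)}"
    and "is_block G (centr G Q) e \<and> brauer G Q i \<in> {conv G a e |a. a \<in> galg G (centr G Q)}"
  shows "e = eQ G i Q"
proof -
  have "is_block G (centr G Q) (eQ G i Q) \<and> brauer G Q i \<in> {conv G a (eQ G i Q) |a. a \<in> galg G (centr G Q)}"
    by (rule eQ_spec[OF assms(1)])
  moreover obtain x where "\<forall>y. is_block G (centr G Q) y \<and> brauer G Q i \<in> {conv G a y |a. a \<in> galg G (centr G Q)} \<longrightarrow> y = x"
    using assms(1) unfolding Ex1_def by blast
  ultimately show ?thesis using assms(2) by blast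
qed

lemma lin_gsum:
  fixes N :: "('g \<Rightarrow> 'k::field) set" and g :: "('g \<Rightarrow> 'k) \<Rightarrow> ('g \<Rightarrow> 'k)"
  assumes fin: "finite S" and nN: "\<And>y. y \<in> S \<Longrightarrow> n y \<in> N" and z0: "z0 \<in> N"
    and addN: "\<And>a b. a \<in> N \<Longrightarrow> b \<in> N \<Longrightarrow> gadd a b \<in> N"
    and smN: "\<And>t a. a \<in> N \<Longrightarrow> gsmult t a \<in> N"
    and gadd: "\<forall>m \<in> N. \<forall>m' \<in> N. g (gadd m m') = gadd (g m) (g m')"
    and gsm: "\<forall>t. \<forall>m \<in> N. g (gsmult t m) = gsmult t (g m)"
  shows "gsum S (\<lambda>y. gsmult (t y) (n y)) \<in> N \<and> g (gsum S (\<lambda>y. gsmult (t y) (n y))) = gsum S (\<lambda>y. gsmult (t y) (g (n y)))"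
  using fin nN
proof (induction S rule: finite_induct)
  case empty
  have e: "gsum {} (\<lambda>y. gsmult (t y) (n y)) = gsmult 0 z0"
    by (simp add: gsum_def gsmult_def)
  have "g (gsmult 0 z0) = gsmult 0 (g z0)" using gsm z0 by blast
  moreover have "gsmult 0 (g z0) = gsum {} (\<lambda>y. gsmult (t y) (g (n y)))" by (simp add: gsum_def gsmult_def)
  ultimately show ?case unfolding e using smN[OF z0] by simp
next
  case (insert y S)
  have ins: "gsum (insert y S) F = gadd (F y) (gsum S F)" for F :: "'a \<Rightarrow> 'g \<Rightarrow> 'k"
    using insert.hyps by (simp add: gsum_def gadd_def)
  have IH: "gsum S (\<lambda>y. gsmult (t y) (n y)) \<in> N \<and> g (gsum S (\<lambda>y. gsmult (t y) (n y))) = gsum S (\<lambda>y. gsmult (t y) (g (n y)))"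
    using insert by auto
  have ny: "gsmult (t y) (n y) \<in> N" using smN insert.prems by auto
  show ?case unfolding ins using IH ny addN gadd gsm insert.prems by auto
qed

context fgrp
begin

lemma subgroup_centr: "Q \<subseteq> carrier G \<Longrightarrow> subgroup (centr G Q) G"
proof (rule subgroupI)
  assume Q: "Q \<subseteq> carrier G"
  show "centr G Q \<subseteq> carrier G" by (auto simp: centr_def)
  show "centr G Q \<noteq> {}" using Q by (auto simp: centr_def intro!: exI[of _ \<one>])
  fix a assume a: "a \<in> centr G Q"
  hence ac: "a \<in> carrier G" by (simp add: centr_def)
  show "inv a \<in> centr G Q" unfolding centr_def
  proof (intro CollectI conjI ballI)
    show "inv a \<in> carrier G" using ac by simp
    fix u assume u: "u \<in> Q"
    hence uc: "u \<in> carrier G" using Q by auto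
    have "a \<otimes> u = u \<otimes> a" using a u by (simp add: centr_def)
    thus "inv a \<otimes> u = u \<otimes> inv a" using ac uc
      by (metis inv_closed inv_solve_left m_assoc m_closed r_inv r_one)
  qed
next
  fix a b assume Q: "Q \<subseteq> carrier G" and a: "a \<in> centr G Q" and b: "b \<in> centr G Q"
  show "a \<otimes> b \<in> centr G Q" unfolding centr_def
  proof (intro CollectI conjI ballI)
    show "a \<otimes> b \<in> carrier G" using a b by (simp add: centr_def)
    fix u assume u: "u \<in> Q"
    have ac: "a \<in> carrier G" and bc: "b \<in> carrier G" and uc: "u \<in> carrier G" using a b u Q by (auto simp: centr_def)
    have "a \<otimes> u = u \<otimes> a" "b \<otimes> u = u \<otimes> b" using a b u by (auto simp: centr_def)
    thus "a \<otimes> b \<otimes> u = u \<otimes> (a \<otimes> b)" using ac bc uc by (metis m_assoc)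
  qed
qed

lemma conjset_self: "subgroup Q G \<Longrightarrow> u \<in> Q \<Longrightarrow> conjset G u Q = Q"
proof -
  assume Q: "subgroup Q G" and u: "u \<in> Q"
  have Qc: "Q \<subseteq> carrier G" using Q subgroup.subset by blast
  have uc: "u \<in> carrier G" using u Qc by auto
  show ?thesis
  proof (rule Set.set_eqI)
    fix z
    show "(z \<in> conjset G u Q) = (z \<in> Q)"
    proof (cases "z \<in> carrier G")
      case False thus ?thesis using conjset_sub[OF uc Qc] Qc by auto
    next
      case z: True
      have "(z \<in> conjset G u Q) = (inv u \<otimes> z \<otimes> u \<in> Q)" by (rule conjset_mem[OF uc Qc z])
      also have "\<dots> = (z \<in> Q)"
      proof
        assume "inv u \<otimes> z \<otimes> u \<in> Q"
        hence "u \<otimes> (inv u \<otimes> z \<otimes> u) \<otimes> inv u \<in> Q"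
          using u Q by (meson subgroup.m_closed subgroup.m_inv_closed)
        thus "z \<in> Q" using uc z by (simp add: m_assoc)
      next
        assume "z \<in> Q"
        thus "inv u \<otimes> z \<otimes> u \<in> Q" using u Q by (meson subgroup.m_closed subgroup.m_inv_closed)
      qed
      finally show ?thesis .
    qed
  qed
qed

lemma centr_conj_mem: "subgroup S G \<Longrightarrow> v \<in> S \<Longrightarrow> d \<in> carrier G \<Longrightarrow>
   (v \<otimes> d \<otimes> inv v \<in> centr G S) = (d \<in> centr G S)"
proof -
  assume S: "subgroup S G" and v: "v \<in> S" and d: "d \<in> carrier G"
  have Sc: "S \<subseteq> carrier G" using S subgroup.subset by blast
  have vc: "v \<in> carrier G" using v Sc by auto
  have C: "centr G S \<subseteq> carrier G" by (auto simp: centr_def)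
  have "centr G S = conjset G v (centr G S)"
    using centr_conjset[OF vc Sc] conjset_self[OF S v] by simp
  hence "(v \<otimes> d \<otimes> inv v \<in> centr G S) = (v \<otimes> d \<otimes> inv v \<in> conjset G v (centr G S))" by simp
  also have "\<dots> = (d \<in> centr G S)" using conjset_mem[OF vc C] vc d by (simp add: m_assoc)
  finally show ?thesis .
qed

end

context fgrp
begin

lemma g1: "a \<in> carrier G \<Longrightarrow> y \<in> carrier G \<Longrightarrow> v \<in> carrier G \<Longrightarrow> (a \<otimes> y \<otimes> inv v = y) = (a \<otimes> y = y \<otimes> v)"
proof
  assume a: "a \<in> carrier G" and y: "y \<in> carrier G" and v: "v \<in> carrier G"
  { assume h: "a \<otimes> y \<otimes> inv v = y"
    have "a \<otimes> y = (a \<otimes> y \<otimes> inv v) \<otimes> v" using a y v by (simp add: m_assoc)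
    thus "a \<otimes> y = y \<otimes> v" using h by simp }
  { assume h: "a \<otimes> y = y \<otimes> v"
    have "a \<otimes> y \<otimes> inv v = y \<otimes> v \<otimes> inv v" using h by simp
    thus "a \<otimes> y \<otimes> inv v = y" using y v by (simp add: m_assoc) }
qed

lemma g2: "a \<in> carrier G \<Longrightarrow> y \<in> carrier G \<Longrightarrow> v \<in> carrier G \<Longrightarrow> a \<otimes> y = y \<otimes> v \<Longrightarrow> v = inv y \<otimes> a \<otimes> y"
proof -
  assume a: "a \<in> carrier G" and y: "y \<in> carrier G" and v: "v \<in> carrier G" and h: "a \<otimes> y = y \<otimes> v"
  have "inv y \<otimes> a \<otimes> y = inv y \<otimes> (a \<otimes> y)" using a y by (simp add: m_assoc)
  also have "\<dots> = v" using h y v by simp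
  finally show ?thesis by simp
qed

lemma g3: "a \<in> carrier G \<Longrightarrow> w \<in> carrier G \<Longrightarrow> w \<otimes> a = a \<otimes> w \<Longrightarrow> inv w \<otimes> a = a \<otimes> inv w"
proof -
  assume a: "a \<in> carrier G" and w: "w \<in> carrier G" and h: "w \<otimes> a = a \<otimes> w"
  have "inv w \<otimes> a = inv w \<otimes> (a \<otimes> w) \<otimes> inv w" using a w by (simp add: m_assoc)
  also have "\<dots> = inv w \<otimes> (w \<otimes> a) \<otimes> inv w" using h by simp
  also have "\<dots> = a \<otimes> inv w" using a w by simp
  finally show ?thesis .
qed

lemma g4: "a \<in> carrier G \<Longrightarrow> y \<in> carrier G \<Longrightarrow> v \<in> carrier G \<Longrightarrow> a \<otimes> y = y \<otimes> v \<Longrightarrow> inv y \<otimes> a = v \<otimes> inv y"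
proof -
  assume a: "a \<in> carrier G" and y: "y \<in> carrier G" and v: "v \<in> carrier G" and h: "a \<otimes> y = y \<otimes> v"
  have "inv y \<otimes> a = inv y \<otimes> (a \<otimes> y) \<otimes> inv y" using a y by (simp add: m_assoc)
  also have "\<dots> = v \<otimes> inv y" using h y v by (simp add: m_assoc)
  finally show ?thesis .
qed

lemma g5: "a \<in> carrier G \<Longrightarrow> y \<in> carrier G \<Longrightarrow> v \<in> carrier G \<Longrightarrow> a \<otimes> y = y \<otimes> v \<Longrightarrow> inv a \<otimes> y = y \<otimes> inv v"
proof -
  assume a: "a \<in> carrier G" and y: "y \<in> carrier G" and v: "v \<in> carrier G" and h: "a \<otimes> y = y \<otimes> v"
  have "inv a \<otimes> y = inv a \<otimes> (y \<otimes> v) \<otimes> inv v" using v y a by (simp add: m_assoc)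
  also have "\<dots> = inv a \<otimes> (a \<otimes> y) \<otimes> inv v" using h by simp
  also have "\<dots> = y \<otimes> inv v" using a y by simp
  finally show ?thesis .
qed

end

context fgrp
begin

lemma main:
  fixes p :: nat
    and b i e :: "'g \<Rightarrow> 'k::field" and P Q R :: "'g set" and \<phi> :: "'g \<Rightarrow> 'g"
  assumes "group G" and "finite (carrier G)"
    and "Factorial_Ring.prime p" and "CHAR('k) = p"
    and "True"
    and "True"
    and "True"
    and "defect_group G p b P"
    and "almost_source G b P i"
    and "subgroup Q G" and "Q \<subseteq> P" and "subgroup R G" and "R \<subseteq> P"
    and "is_block G (centr G Q) e" and "conv G (brauer G Q i) e \<noteq> gzero"
    and "\<forall>u \<in> Q. \<phi> u \<in> R"
    and "\<forall>u \<in> Q. \<forall>v \<in> Q. \<phi> (u \<otimes> v) = \<phi> u \<otimes> \<phi> v"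
    and "True"
    and "bimod_summand G Q R \<phi> (galg G R) id
           {conv G (conv G e a) i | a. a \<in> galg G (carrier G)}"
  shows "fusion_hom G i Q R \<phi>"
proof -
  have Qs: "subgroup Q G" and QP: "Q \<subseteq> P" and Rs: "subgroup R G" and RP: "R \<subseteq> P"
    using assms by auto
  have pP: "p_subgroup G p P" using assms(8) by (simp add: defect_group_def)
  hence Ps: "subgroup P G" and "\<exists>n. card P = p ^ n" by (auto simp: p_subgroup_def)
  then obtain n where cardP: "card P = p ^ n" by blast
  have Pc: "P \<subseteq> carrier G" using Ps subgroup.subset by blast
  have Qc: "Q \<subseteq> carrier G" using Qs subgroup.subset by blast
  have Rc: "R \<subseteq> carrier G" using Rs subgroup.subset by blast
  have AS: "i \<in> fixed_pts G P" "conv G i i = i"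
    and uniq: "\<And>Q'. subgroup Q' G \<Longrightarrow> Q' \<subseteq> P \<Longrightarrow>
        \<exists>!e. is_block G (centr G Q') e \<and> brauer G Q' i \<in> {conv G a e |a. a \<in> galg G (centr G Q')}"
    using assms(9) unfolding almost_source_def by blast+
  have isup: "i \<in> galg G (carrier G)" and ifix: "\<And>u. u \<in> P \<Longrightarrow> gconj G u i = i"
    using AS(1) by (auto simp: fixed_pts_def)
  have ii: "conv G i i = i" by (rule AS(2))
  define C where "C = centr G Q"
  have Cs: "subgroup C G" using subgroup_centr[OF Qc] C_def by simp
  have Cc: "C \<subseteq> carrier G" by (auto simp: C_def centr_def)
  have eb: "is_block G C e" using assms(14) C_def by simp
  have ec: "e \<in> gcenter G C" and ee: "conv G e e = e" using eb by (auto simp: is_block_def)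
  have eg: "e \<in> galg G C" using center_galg[OF ec] .
  have esup: "e \<in> galg G (carrier G)" using galg_mono[OF Cc eg] .
  have EQ: "is_block G C (eQ G i Q) \<and> brauer G Q i \<in> {conv G a (eQ G i Q) |a. a \<in> galg G C}"
    using eQ_spec[OF uniq[OF Qs QP]] C_def by simp
  then obtain a where a: "a \<in> galg G C" and Bi: "brauer G Q i = conv G a (eQ G i Q)" by blast
  have "conv G (eQ G i Q) e \<noteq> gzero"
  proof
    assume "conv G (eQ G i Q) e = gzero"
    hence "conv G (brauer G Q i) e = gzero" using Bi by (simp add: conv_assoc conv_zero_right)
    thus False using assms(15) by simp
  qed
  hence eEQ: "eQ G i Q = e" using block_orth[OF Cs, of "eQ G i Q" e] EQ eb by blast
  have einv: "\<And>u. u \<in> Q \<Longrightarrow> gconj G u e = e"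
  proof -
    fix u assume u: "u \<in> Q"
    have uc: "u \<in> carrier G" using u Qc by auto
    have cQ: "conjset G u Q = Q" by (rule conjset_self[OF Qs u])
    have cC: "conjset G u C = C" using centr_conjset[OF uc Qc] cQ C_def by simp
    have b1: "is_block G C (gconj G u e)" using conj_block[OF uc Cs eb] cC by simp
    have "gconj G u (brauer G Q i) = brauer G Q i"
      using brauer_gconj[OF uc Qc, of i] cQ ifix[of u] u QP by auto
    hence "brauer G Q i = conv G (gconj G u a) (gconj G u e)"
      using Bi eEQ gconj_mult[OF uc galg_mono[OF Cc a]] by simp
    moreover have "gconj G u a \<in> galg G C" using gconj_galg[OF uc Cc a] cC by simp
    ultimately have "is_block G (centr G Q) (gconj G u e) \<and>
        brauer G Q i \<in> {conv G a (gconj G u e) |a. a \<in> galg G (centr G Q)}"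
      using b1 C_def by blast
    hence "gconj G u e = eQ G i Q" by (rule eQ_unique[OF uniq[OF Qs QP]])
    thus "gconj G u e = e" using eEQ by simp
  qed
  define N where "N = {conv G (conv G e a) i | a. a \<in> galg G (carrier G)}"
  obtain f g where fh: "bimod_hom G Q R \<phi> (galg G R) id N f"
      and gh: "bimod_hom G Q R id N \<phi> (galg G R) g"
      and gf: "\<forall>m \<in> galg G R. g (f m) = m"
    using assms(19) unfolding bimod_summand_def N_def by blast
  have one_R: "\<one> \<in> R" using subgroup.one_closed[OF Rs] .
  have d1R: "delta \<one> \<in> galg G R" by (rule delta_supp[OF one_R])
  define c where "c = f (delta \<one>)"
  have fN: "\<forall>m \<in> galg G R. f m \<in> N"
    and fL: "\<forall>u \<in> Q. \<forall>m \<in> galg G R. f (conv G (delta (\<phi> u)) m) = conv G (delta u) (f m)"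
    and fR: "\<forall>v \<in> R. \<forall>m \<in> galg G R. f (conv G m (delta v)) = conv G (f m) (delta v)"
    using fh unfolding bimod_hom_def by auto
  have cN: "c \<in> N" using fN d1R c_def by blast
  then obtain a0 where a0: "a0 \<in> galg G (carrier G)" and ca0: "c = conv G (conv G e a0) i"
    by (auto simp: N_def)
  have gc: "g c = delta \<one>" using gf d1R c_def by blast
  have csup: "c \<in> galg G (carrier G)" using ca0 conv_supp by simp
  have phiR: "\<And>u. u \<in> Q \<Longrightarrow> \<phi> u \<in> R" using assms(16) by blast
  have phic: "\<And>u. u \<in> Q \<Longrightarrow> \<phi> u \<in> carrier G" using phiR Rc by auto
  have phiP: "\<And>u. u \<in> Q \<Longrightarrow> \<phi> u \<in> P" using phiR RP by auto
  have phiinvR: "\<And>u. u \<in> Q \<Longrightarrow> inv (\<phi> u) \<in> R" using phiR subgroup.m_inv_closed[OF Rs] by blast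
  have phiinvP: "\<And>u. u \<in> Q \<Longrightarrow> inv (\<phi> u) \<in> P" using phiinvR RP by auto
  have phimul: "\<And>u v. u \<in> Q \<Longrightarrow> v \<in> Q \<Longrightarrow> \<phi> (u \<otimes> v) = \<phi> u \<otimes> \<phi> v" using assms(17) by blast
  have phi1: "\<phi> \<one> = \<one>"
  proof -
    have o: "\<one> \<in> Q" using subgroup.one_closed[OF Qs] .
    have "\<phi> \<one> \<otimes> \<phi> \<one> = \<phi> \<one>" using phimul[OF o o] by simp
    thus ?thesis using phic[OF o] by simp
  qed
  have twist: "\<And>u. u \<in> Q \<Longrightarrow> conv G (delta u) c = conv G c (delta (\<phi> u))"
  proof -
    fix u assume u: "u \<in> Q"
    have "f (conv G (delta (\<phi> u)) (delta \<one>)) = conv G (delta u) c"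
      using fL u d1R c_def by blast
    moreover have "f (conv G (delta \<one>) (delta (\<phi> u))) = conv G c (delta (\<phi> u))"
      using fR phiR[OF u] d1R c_def by blast
    moreover have "conv G (delta (\<phi> u)) (delta \<one>) = conv G (delta \<one>) (delta (\<phi> u))"
      using phic[OF u] by (simp add: delta_mult)
    ultimately show "conv G (delta u) c = conv G c (delta (\<phi> u))" by metis
  qed
  have ctw: "\<And>u y. u \<in> Q \<Longrightarrow> y \<in> carrier G \<Longrightarrow> c (u \<otimes> y \<otimes> inv (\<phi> u)) = c y"
  proof -
    fix u y assume u: "u \<in> Q" and y: "y \<in> carrier G"
    have uc: "u \<in> carrier G" using u Qc by auto
    have "conv G (delta u) c (u \<otimes> y) = conv G c (delta (\<phi> u)) (u \<otimes> y)" using twist[OF u] by simp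
    thus "c (u \<otimes> y \<otimes> inv (\<phi> u)) = c y" using uc y phic[OF u] by (simp add: conv_delta_left conv_delta_right)
  qed
  have ec_eq: "conv G e c = c" using ca0 ee by (simp add: conv_assoc[symmetric])
  have ci_eq: "conv G c i = c" using ca0 ii by (simp add: conv_assoc)
  define nn where "nn y = conv G (conv G e (delta y)) i" for y
  have nnN: "\<And>y. y \<in> carrier G \<Longrightarrow> nn y \<in> N" unfolding nn_def N_def using delta_supp by blast
  have cdec: "c = gsum (carrier G) (\<lambda>y. gsmult (c y) (nn y))"
  proof -
    have "c = conv G (conv G e c) i" using ec_eq ci_eq by simp
    also have "\<dots> = conv G (conv G e (gsum (carrier G) (\<lambda>y. gsmult (c y) (delta y)))) i"
      by (rule arg_cong[where f="\<lambda>z. conv G (conv G e z) i"], rule decomp[OF csup])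
    also have "\<dots> = gsum (carrier G) (\<lambda>y. gsmult (c y) (nn y))"
      by (simp add: conv_gsum_right conv_gsum_left fin conv_smult_right conv_smult_left nn_def)
    finally show ?thesis .
  qed
  have Nadd: "\<And>x y. x \<in> N \<Longrightarrow> y \<in> N \<Longrightarrow> gadd x y \<in> N"
  proof -
    fix x y assume "x \<in> N" "y \<in> N"
    then obtain a1 a2 where "a1 \<in> galg G (carrier G)" "a2 \<in> galg G (carrier G)"
      "x = conv G (conv G e a1) i" "y = conv G (conv G e a2) i" by (auto simp: N_def)
    moreover have "gadd a1 a2 \<in> galg G (carrier G)" using calculation by (simp add: galg_def gadd_def)
    ultimately show "gadd x y \<in> N" unfolding N_def
      by (auto simp: conv_add_left conv_add_right intro!: exI[of _ "gadd a1 a2"])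
  qed
  have Nsm: "\<And>t x. x \<in> N \<Longrightarrow> gsmult t x \<in> N"
  proof -
    fix t x assume "x \<in> N"
    then obtain a1 where "a1 \<in> galg G (carrier G)" "x = conv G (conv G e a1) i" by (auto simp: N_def)
    moreover have "gsmult t a1 \<in> galg G (carrier G)" using calculation by (simp add: galg_def gsmult_def)
    ultimately show "gsmult t x \<in> N" unfolding N_def
      by (auto simp: conv_smult_left conv_smult_right intro!: exI[of _ "gsmult t a1"])
  qed
  have gadd: "\<forall>m \<in> N. \<forall>m' \<in> N. g (gadd m m') = gadd (g m) (g m')"
    and gsm: "\<forall>t. \<forall>m \<in> N. g (gsmult t m) = gsmult t (g m)"
    and gL: "\<forall>u \<in> Q. \<forall>m \<in> N. g (conv G (delta u) m) = conv G (delta (\<phi> u)) (g m)"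
    and gR: "\<forall>v \<in> R. \<forall>m \<in> N. g (conv G m (delta v)) = conv G (g m) (delta v)"
    using gh unfolding bimod_hom_def by auto
  have "g c = gsum (carrier G) (\<lambda>y. gsmult (c y) (g (nn y)))"
    using lin_gsum[of "carrier G" nn N c g c, OF fin nnN cN Nadd Nsm gadd gsm] cdec by simp
  hence "g c \<one> = (\<Sum>y\<in>carrier G. c y * g (nn y) \<one>)" by (simp add: gsum_def gsmult_def)
  moreover have "g c \<one> = 1" by (simp add: gc delta_def)
  ultimately have sum1: "(\<Sum>y\<in>carrier G. c y * g (nn y) \<one>) = 1" by simp
  define act where "act u y = u \<otimes> y \<otimes> inv (\<phi> u)" for u y
  define T where "T = {y \<in> carrier G. \<forall>u\<in>Q. act u y = y}"
  define H where "H = G\<lparr>carrier := Q\<rparr>"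
  have Hg: "group H" unfolding H_def by (rule subgroup.subgroup_is_group[OF Qs is_group])
  have Hc: "carrier H = Q" by (simp add: H_def)
  have ordH: "order H dvd p ^ n"
  proof -
    have PG: "group (G\<lparr>carrier := P\<rparr>)" by (rule subgroup.subgroup_is_group[OF Ps is_group])
    have "subgroup Q (G\<lparr>carrier := P\<rparr>)" by (rule subgroup_incl[OF Qs Ps QP])
    from group.lagrange[OF PG this]
    have "card (rcosets\<^bsub>G\<lparr>carrier := P\<rparr>\<^esub> Q) * card Q = order (G\<lparr>carrier := P\<rparr>)" .
    moreover have "order (G\<lparr>carrier := P\<rparr>) = card P" by (simp add: order_def)
    ultimately have "card Q dvd card P" by (metis dvd_triv_right)
    thus ?thesis using cardP by (simp add: H_def order_def)
  qed
  have act_closed: "\<And>u y. u \<in> Q \<Longrightarrow> y \<in> carrier G \<Longrightarrow> act u y \<in> carrier G"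
    using Qc phic by (auto simp: act_def)
  have act_one: "\<And>y. y \<in> carrier G \<Longrightarrow> act \<one> y = y" by (simp add: act_def phi1)
  have act_comp: "\<And>u v y. u \<in> Q \<Longrightarrow> v \<in> Q \<Longrightarrow> y \<in> carrier G \<Longrightarrow> act (u \<otimes> v) y = act u (act v y)"
  proof -
    fix u v y assume u: "u \<in> Q" and v: "v \<in> Q" and y: "y \<in> carrier G"
    have uc: "u \<in> carrier G" and vc: "v \<in> carrier G" using u v Qc by auto
    show "act (u \<otimes> v) y = act u (act v y)"
      using uc vc y phic[OF u] phic[OF v] by (simp add: act_def phimul[OF u v] inv_mult_group m_assoc)
  qed
  have cact: "\<And>u y. u \<in> Q \<Longrightarrow> y \<in> carrier G \<Longrightarrow> c (act u y) = c y"
    unfolding act_def by (rule ctw)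
  have eu: "\<And>u Zz. u \<in> Q \<Longrightarrow> conv G e (conv G (delta u) Zz) = conv G (delta u) (conv G e Zz)"
  proof -
    fix u Zz assume u: "u \<in> Q"
    have uc: "u \<in> carrier G" using u Qc by auto
    have "conv G (delta u) e = conv G e (delta u)" by (rule gconj_delta_comm[OF uc esup einv[OF u]])
    thus "conv G e (conv G (delta u) Zz) = conv G (delta u) (conv G e Zz)" by (metis conv_assoc)
  qed
  have iv: "\<And>u. u \<in> Q \<Longrightarrow> conv G (delta (inv (\<phi> u))) i = conv G i (delta (inv (\<phi> u)))"
  proof -
    fix u assume u: "u \<in> Q"
    have "inv (\<phi> u) \<in> carrier G" using phic[OF u] by simp
    thus "conv G (delta (inv (\<phi> u))) i = conv G i (delta (inv (\<phi> u)))"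
      using gconj_delta_comm[OF _ isup ifix[OF phiinvP[OF u]]] by blast
  qed
  have nn_act: "\<And>u y. u \<in> Q \<Longrightarrow> y \<in> carrier G \<Longrightarrow>
      nn (act u y) = conv G (conv G (delta u) (nn y)) (delta (inv (\<phi> u)))"
  proof -
    fix u y assume u: "u \<in> Q" and y: "y \<in> carrier G"
    have uc: "u \<in> carrier G" using u Qc by auto
    have vc: "inv (\<phi> u) \<in> carrier G" using phic[OF u] by simp
    have d: "delta (act u y) = conv G (delta u) (conv G (delta y) (delta (inv (\<phi> u))))"
      using uc y vc by (simp add: act_def delta_mult m_assoc)
    show "nn (act u y) = conv G (conv G (delta u) (nn y)) (delta (inv (\<phi> u)))"
      unfolding nn_def d by (simp add: conv_assoc iv[OF u] eu[OF u])
  qed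
  have gnn_act: "\<And>u y. u \<in> Q \<Longrightarrow> y \<in> carrier G \<Longrightarrow> g (nn (act u y)) \<one> = g (nn y) \<one>"
  proof -
    fix u y assume u: "u \<in> Q" and y: "y \<in> carrier G"
    have uc: "u \<in> carrier G" using u Qc by auto
    have mN: "conv G (delta u) (nn y) \<in> N"
    proof -
      have "conv G (delta u) (nn y) = nn (u \<otimes> y)" unfolding nn_def using uc y
        by (simp add: conv_assoc eu[OF u] delta_mult[symmetric])
      thus ?thesis using nnN[of "u \<otimes> y"] uc y by simp
    qed
    have "g (nn (act u y)) = conv G (g (conv G (delta u) (nn y))) (delta (inv (\<phi> u)))"
      unfolding nn_act[OF u y] by (rule gR[rule_format, OF phiinvR[OF u] mN])
    also have "\<dots> = conv G (conv G (delta (\<phi> u)) (g (nn y))) (delta (inv (\<phi> u)))"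
      using gL[rule_format, OF u nnN[OF y]] by simp
    finally show "g (nn (act u y)) \<one> = g (nn y) \<one>"
      using phic[OF u] by (simp add: conv_delta_right conv_delta_left)
  qed
  have sumT: "(\<Sum>y\<in>carrier G. c y * g (nn y) \<one>) = (\<Sum>y\<in>T. c y * g (nn y) \<one>)"
  proof -
    have "(\<Sum>y\<in>carrier G. c y * g (nn y) \<one>) =
        (\<Sum>y\<in>{y\<in>carrier G. \<forall>u\<in>carrier H. act u y = y}. c y * g (nn y) \<one>)"
    proof (rule orbit_sum_mod_p[OF Hg fin assms(3) assms(4) ordH])
      show "\<And>u x. u \<in> carrier H \<Longrightarrow> x \<in> carrier G \<Longrightarrow> act u x \<in> carrier G" using act_closed Hc by auto
      show "\<And>x. x \<in> carrier G \<Longrightarrow> act \<one>\<^bsub>H\<^esub> x = x" using act_one by (simp add: H_def)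
      show "\<And>u v x. u \<in> carrier H \<Longrightarrow> v \<in> carrier H \<Longrightarrow> x \<in> carrier G \<Longrightarrow> act (u \<otimes>\<^bsub>H\<^esub> v) x = act u (act v x)"
        using act_comp by (simp add: H_def)
      show "\<And>u x. u \<in> carrier H \<Longrightarrow> x \<in> carrier G \<Longrightarrow> c (act u x) * g (nn (act u x)) \<one> = c x * g (nn x) \<one>"
        using cact gnn_act Hc by simp
    qed
    thus ?thesis by (simp add: T_def Hc)
  qed
  obtain y0 where y0T: "y0 \<in> T" and cy0: "c y0 \<noteq> 0"
  proof -
    have "(\<Sum>y\<in>T. c y * g (nn y) \<one>) = 1" using sum1 sumT by simp
    hence "\<exists>y\<in>T. c y \<noteq> 0" by (metis (mono_tags, lifting) mult_zero_left sum.neutral zero_neq_one)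
    thus ?thesis using that by blast
  qed
  have Tchar: "\<And>y. (y \<in> T) = (y \<in> carrier G \<and> (\<forall>u\<in>Q. u \<otimes> y = y \<otimes> \<phi> u))"
  proof -
    fix y
    have "\<And>u. y \<in> carrier G \<Longrightarrow> u \<in> Q \<Longrightarrow> (act u y = y) = (u \<otimes> y = y \<otimes> \<phi> u)"
      unfolding act_def using g1 Qc phic by blast
    thus "(y \<in> T) = (y \<in> carrier G \<and> (\<forall>u\<in>Q. u \<otimes> y = y \<otimes> \<phi> u))" by (auto simp: T_def)
  qed
  have y0c: "y0 \<in> carrier G" and y0t: "\<And>u. u \<in> Q \<Longrightarrow> u \<otimes> y0 = y0 \<otimes> \<phi> u"
    using y0T Tchar by auto
  define x where "x = inv y0"
  have xc: "x \<in> carrier G" using y0c by (simp add: x_def)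
  have phix: "\<And>u. u \<in> Q \<Longrightarrow> \<phi> u = x \<otimes> u \<otimes> inv x"
  proof -
    fix u assume u: "u \<in> Q"
    have uc: "u \<in> carrier G" using u Qc by auto
    show "\<phi> u = x \<otimes> u \<otimes> inv x" using g2[OF uc y0c phic[OF u] y0t[OF u]] y0c by (simp add: x_def)
  qed
  define R' where "R' = conjset G x Q"
  have R'im: "R' = \<phi> ` Q"
  proof -
    have "(\<lambda>u. x \<otimes> u \<otimes> inv x) ` Q = \<phi> ` Q" by (rule image_cong) (auto simp: phix)
    thus ?thesis by (simp add: R'_def conjset_def)
  qed
  have R's: "subgroup R' G" unfolding R'_def by (rule subgroup_conjset[OF xc Qs])
  have R'P: "R' \<subseteq> P" using R'im phiP by auto
  have R'c: "R' \<subseteq> carrier G" using R'P Pc by auto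
  define C' where "C' = centr G R'"
  have C's: "subgroup C' G" using subgroup_centr[OF R'c] C'_def by simp
  have C'c: "C' \<subseteq> carrier G" by (auto simp: C'_def centr_def)
  have C'conj: "C' = conjset G x C" unfolding C'_def R'_def C_def by (rule centr_conjset[OF xc Qc])
  define e' where "e' = gconj G x e"
  have e'b: "is_block G C' e'" using conj_block[OF xc Cs eb] C'conj e'_def by simp
  have E': "is_block G C' (eQ G i R') \<and> brauer G R' i \<in> {conv G a (eQ G i R') |a. a \<in> galg G C'}"
    using eQ_spec[OF uniq[OF R's R'P]] C'_def by simp
  then obtain a' where a': "a' \<in> galg G C'" and Bi': "brauer G R' i = conv G a' (eQ G i R')" by blast
  have TC1: "\<And>w z. w \<in> C \<Longrightarrow> z \<in> carrier G \<Longrightarrow> (inv w \<otimes> z \<in> T) = (z \<in> T)"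
  proof -
    fix w z assume w: "w \<in> C" and z: "z \<in> carrier G"
    have wc: "w \<in> carrier G" using w Cc by auto
    have "\<And>u. u \<in> Q \<Longrightarrow> (u \<otimes> (inv w \<otimes> z) = (inv w \<otimes> z) \<otimes> \<phi> u) = (u \<otimes> z = z \<otimes> \<phi> u)"
    proof -
      fix u assume u: "u \<in> Q"
      have uc: "u \<in> carrier G" using u Qc by auto
      have cm: "w \<otimes> u = u \<otimes> w" using w u by (simp add: C_def centr_def)
      have "u \<otimes> (inv w \<otimes> z) = inv w \<otimes> (u \<otimes> z)"
        using g3[OF uc wc cm] uc wc z by (metis inv_closed m_assoc)
      moreover have "(inv w \<otimes> z) \<otimes> \<phi> u = inv w \<otimes> (z \<otimes> \<phi> u)" using wc z phic[OF u] by (simp add: m_assoc)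
      ultimately show "(u \<otimes> (inv w \<otimes> z) = (inv w \<otimes> z) \<otimes> \<phi> u) = (u \<otimes> z = z \<otimes> \<phi> u)"
        using wc z uc phic[OF u] by simp
    qed
    thus "(inv w \<otimes> z \<in> T) = (z \<in> T)" using Tchar wc z by auto
  qed
  have TC2: "\<And>w d. w \<in> T \<Longrightarrow> d \<in> C' \<Longrightarrow> w \<otimes> d \<in> T"
  proof -
    fix w d assume w: "w \<in> T" and d: "d \<in> C'"
    have wc: "w \<in> carrier G" using w Tchar by auto
    have dc: "d \<in> carrier G" using d C'c by auto
    have "\<And>u. u \<in> Q \<Longrightarrow> u \<otimes> (w \<otimes> d) = (w \<otimes> d) \<otimes> \<phi> u"
    proof -
      fix u assume u: "u \<in> Q"
      have uc: "u \<in> carrier G" using u Qc by auto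
      have cm: "d \<otimes> \<phi> u = \<phi> u \<otimes> d" using d u R'im by (auto simp: C'_def centr_def)
      have wu: "u \<otimes> w = w \<otimes> \<phi> u" using w u Tchar by auto
      have "u \<otimes> (w \<otimes> d) = (u \<otimes> w) \<otimes> d" using uc wc dc by (simp add: m_assoc)
      also have "\<dots> = w \<otimes> (\<phi> u \<otimes> d)" using wu wc dc phic[OF u] by (simp add: m_assoc)
      also have "\<dots> = w \<otimes> (d \<otimes> \<phi> u)" using cm by simp
      also have "\<dots> = (w \<otimes> d) \<otimes> \<phi> u" using wc dc phic[OF u] by (simp add: m_assoc)
      finally show "u \<otimes> (w \<otimes> d) = (w \<otimes> d) \<otimes> \<phi> u" .
    qed
    thus "w \<otimes> d \<in> T" using Tchar wc dc by auto
  qed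
  have TC3: "\<And>w z. w \<in> T \<Longrightarrow> z \<in> T \<Longrightarrow> inv w \<otimes> z \<in> C'"
  proof -
    fix w z assume w: "w \<in> T" and z: "z \<in> T"
    have wc: "w \<in> carrier G" and zc: "z \<in> carrier G" using w z Tchar by auto
    have "\<And>r. r \<in> R' \<Longrightarrow> (inv w \<otimes> z) \<otimes> r = r \<otimes> (inv w \<otimes> z)"
    proof -
      fix r assume "r \<in> R'"
      then obtain u where u: "u \<in> Q" and r: "r = \<phi> u" using R'im by auto
      have uc: "u \<in> carrier G" using u Qc by auto
      have zu: "u \<otimes> z = z \<otimes> \<phi> u" and wu: "u \<otimes> w = w \<otimes> \<phi> u" using w z u Tchar by auto
      have wi: "inv w \<otimes> u = \<phi> u \<otimes> inv w" by (rule g4[OF uc wc phic[OF u] wu])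
      have "(inv w \<otimes> z) \<otimes> \<phi> u = inv w \<otimes> (u \<otimes> z)" using wc zc phic[OF u] zu by (simp add: m_assoc)
      also have "\<dots> = (inv w \<otimes> u) \<otimes> z" using wc zc uc by (simp add: m_assoc)
      also have "\<dots> = \<phi> u \<otimes> (inv w \<otimes> z)" using wi wc zc phic[OF u] by (simp add: m_assoc)
      finally show "(inv w \<otimes> z) \<otimes> r = r \<otimes> (inv w \<otimes> z)" using r by simp
    qed
    thus "inv w \<otimes> z \<in> C'" using wc zc by (simp add: C'_def centr_def)
  qed
  have TC4: "\<And>t. t \<in> T \<Longrightarrow> t \<otimes> inv y0 \<in> C"
  proof -
    fix t assume t: "t \<in> T"
    have tc: "t \<in> carrier G" using t Tchar by auto
    have "\<And>u. u \<in> Q \<Longrightarrow> (t \<otimes> inv y0) \<otimes> u = u \<otimes> (t \<otimes> inv y0)"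
    proof -
      fix u assume u: "u \<in> Q"
      have uc: "u \<in> carrier G" using u Qc by auto
      have tu: "u \<otimes> t = t \<otimes> \<phi> u" using t u Tchar by auto
      have yi: "inv y0 \<otimes> u = \<phi> u \<otimes> inv y0" by (rule g4[OF uc y0c phic[OF u] y0t[OF u]])
      have "(t \<otimes> inv y0) \<otimes> u = t \<otimes> (inv y0 \<otimes> u)" using tc y0c uc by (simp add: m_assoc)
      also have "\<dots> = (t \<otimes> \<phi> u) \<otimes> inv y0" using yi tc y0c phic[OF u] by (simp add: m_assoc)
      also have "\<dots> = u \<otimes> (t \<otimes> inv y0)" using tu[symmetric] tc y0c uc by (simp add: m_assoc)
      finally show "(t \<otimes> inv y0) \<otimes> u = u \<otimes> (t \<otimes> inv y0)" .
    qed
    thus "t \<otimes> inv y0 \<in> C" using tc y0c by (simp add: C_def centr_def)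
  qed
  have TC5: "\<And>z w u. z \<in> T \<Longrightarrow> w \<in> carrier G \<Longrightarrow> u \<in> Q \<Longrightarrow>
      inv (act u w) \<otimes> z = \<phi> u \<otimes> (inv w \<otimes> z) \<otimes> inv (\<phi> u)"
  proof -
    fix z w u assume z: "z \<in> T" and w: "w \<in> carrier G" and u: "u \<in> Q"
    have uc: "u \<in> carrier G" using u Qc by auto
    have zc: "z \<in> carrier G" using z Tchar by auto
    have zu: "u \<otimes> z = z \<otimes> \<phi> u" using z u Tchar by auto
    have ui: "inv u \<otimes> z = z \<otimes> inv (\<phi> u)" by (rule g5[OF uc zc phic[OF u] zu])
    have "inv (act u w) = \<phi> u \<otimes> inv w \<otimes> inv u"
      using uc w phic[OF u] by (simp add: act_def inv_mult_group m_assoc)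
    hence "inv (act u w) \<otimes> z = \<phi> u \<otimes> inv w \<otimes> (inv u \<otimes> z)"
      using uc w zc phic[OF u] by (simp add: m_assoc)
    also have "\<dots> = \<phi> u \<otimes> (inv w \<otimes> z) \<otimes> inv (\<phi> u)" using ui uc w zc phic[OF u] by (simp add: m_assoc)
    finally show "inv (act u w) \<otimes> z = \<phi> u \<otimes> (inv w \<otimes> z) \<otimes> inv (\<phi> u)" .
  qed
  have iconj: "\<And>v d. v \<in> P \<Longrightarrow> d \<in> carrier G \<Longrightarrow> i (v \<otimes> d \<otimes> inv v) = i d"
  proof -
    fix v d assume v: "v \<in> P" and d: "d \<in> carrier G"
    have vc: "v \<in> carrier G" using v Pc by auto
    have "gconj G (inv v) i d = i d" using ifix[OF subgroup.m_inv_closed[OF Ps v]] by simp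
    thus "i (v \<otimes> d \<otimes> inv v) = i d" using vc d by (simp add: gconj_eval)
  qed
  have "e' = eQ G i R'"
  proof (rule ccontr)
    assume ne: "e' \<noteq> eQ G i R'"
    have orth: "conv G (eQ G i R') e' = gzero"
    proof (rule ccontr)
      assume "conv G (eQ G i R') e' \<noteq> gzero"
      hence "eQ G i R' = e'" using block_orth[OF C's, of "eQ G i R'" e'] E' e'b by blast
      thus False using ne by simp
    qed
    define cT where "cT z = (if z \<in> T then c z else 0)" for z
    have cTsup: "cT \<in> galg G (carrier G)" by (auto simp: galg_def cT_def T_def)
    have A: "conv G e cT = cT"
    proof (rule ext)
      fix z
      show "conv G e cT z = cT z"
      proof (cases "z \<in> carrier G")
        case False thus ?thesis by (simp add: conv_out cT_def T_def)
      next
        case z: True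
        have "conv G e cT z = (\<Sum>w\<in>carrier G. e w * cT (inv w \<otimes> z))" using z by (simp add: conv_eval)
        also have "\<dots> = (\<Sum>w\<in>carrier G. e w * (if z \<in> T then c (inv w \<otimes> z) else 0))"
        proof (rule sum.cong[OF refl])
          fix w assume w: "w \<in> carrier G"
          show "e w * cT (inv w \<otimes> z) = e w * (if z \<in> T then c (inv w \<otimes> z) else 0)"
          proof (cases "w \<in> C")
            case True thus ?thesis using TC1[OF True z] by (simp add: cT_def)
          next
            case False hence "e w = 0" using eg by (simp add: galg_def)
            thus ?thesis by simp
          qed
        qed
        also have "\<dots> = (if z \<in> T then conv G e c z else 0)" using z by (simp add: conv_eval)
        also have "\<dots> = cT z" using ec_eq by (simp add: cT_def)
        finally show ?thesis .
      qed
    qed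
    have B: "conv G cT (brauer G R' i) = cT"
    proof (rule ext)
      fix z
      show "conv G cT (brauer G R' i) z = cT z"
      proof (cases "z \<in> carrier G")
        case False thus ?thesis by (simp add: conv_out cT_def T_def)
      next
        case z: True
        have ev: "conv G cT (brauer G R' i) z =
            (\<Sum>w\<in>carrier G. cT w * (if inv w \<otimes> z \<in> C' then i (inv w \<otimes> z) else 0))"
          using z by (simp add: conv_eval brauer_def C'_def)
        show ?thesis
        proof (cases "z \<in> T")
          case False
          have "\<And>w. w \<in> carrier G \<Longrightarrow> cT w * (if inv w \<otimes> z \<in> C' then i (inv w \<otimes> z) else 0) = 0"
          proof -
            fix w assume w: "w \<in> carrier G"
            show "cT w * (if inv w \<otimes> z \<in> C' then i (inv w \<otimes> z) else 0) = 0"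
            proof (cases "w \<in> T \<and> inv w \<otimes> z \<in> C'")
              case True
              hence "w \<otimes> (inv w \<otimes> z) \<in> T" using TC2 by blast
              hence "z \<in> T" using w z by simp
              thus ?thesis using False by simp
            next
              case False thus ?thesis by (auto simp: cT_def)
            qed
          qed
          hence s0: "(\<Sum>w\<in>carrier G. cT w * (if inv w \<otimes> z \<in> C' then i (inv w \<otimes> z) else 0)) = 0"
            by (intro sum.neutral) blast
          have "cT z = 0" using False by (simp add: cT_def)
          thus ?thesis using ev s0 by simp
        next
          case True
          define h2 where "h2 w = c w * (if inv w \<otimes> z \<in> C' then 0 else i (inv w \<otimes> z))" for w
          have split: "\<And>w. w \<in> carrier G \<Longrightarrow>
             c w * i (inv w \<otimes> z) = cT w * (if inv w \<otimes> z \<in> C' then i (inv w \<otimes> z) else 0) + h2 w"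
          proof -
            fix w assume w: "w \<in> carrier G"
            show "c w * i (inv w \<otimes> z) = cT w * (if inv w \<otimes> z \<in> C' then i (inv w \<otimes> z) else 0) + h2 w"
            proof (cases "inv w \<otimes> z \<in> C'")
              case True
              have "inv (inv w \<otimes> z) \<in> C'" using subgroup.m_inv_closed[OF C's True] .
              hence "z \<otimes> inv (inv w \<otimes> z) \<in> T" using TC2[OF \<open>z \<in> T\<close>] by blast
              moreover have "z \<otimes> inv (inv w \<otimes> z) = w" using w z by (simp add: inv_mult_group m_assoc)
              ultimately have "w \<in> T" by simp
              thus ?thesis using True by (simp add: cT_def h2_def)
            next
              case False thus ?thesis by (simp add: h2_def)
            qed
          qed
          have h2sum: "(\<Sum>w\<in>carrier G. h2 w) = 0"
          proof -
            have "(\<Sum>w\<in>carrier G. h2 w) = (\<Sum>w\<in>{w\<in>carrier G. \<forall>u\<in>carrier H. act u w = w}. h2 w)"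
            proof (rule orbit_sum_mod_p[OF Hg fin assms(3) assms(4) ordH])
              show "\<And>u x. u \<in> carrier H \<Longrightarrow> x \<in> carrier G \<Longrightarrow> act u x \<in> carrier G" using act_closed Hc by auto
              show "\<And>x. x \<in> carrier G \<Longrightarrow> act \<one>\<^bsub>H\<^esub> x = x" using act_one by (simp add: H_def)
              show "\<And>u v x. u \<in> carrier H \<Longrightarrow> v \<in> carrier H \<Longrightarrow> x \<in> carrier G \<Longrightarrow> act (u \<otimes>\<^bsub>H\<^esub> v) x = act u (act v x)"
                using act_comp by (simp add: H_def)
              fix u w assume u: "u \<in> carrier H" and w: "w \<in> carrier G"
              have uQ: "u \<in> Q" using u Hc by simp
              have dc: "inv w \<otimes> z \<in> carrier G" using w z by simp
              have e1: "inv (act u w) \<otimes> z = \<phi> u \<otimes> (inv w \<otimes> z) \<otimes> inv (\<phi> u)" by (rule TC5[OF True w uQ])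
              have e2: "(\<phi> u \<otimes> (inv w \<otimes> z) \<otimes> inv (\<phi> u) \<in> C') = (inv w \<otimes> z \<in> C')"
                unfolding C'_def by (rule centr_conj_mem[OF R's _ dc]) (use uQ R'im in auto)
              have e3: "i (\<phi> u \<otimes> (inv w \<otimes> z) \<otimes> inv (\<phi> u)) = i (inv w \<otimes> z)" by (rule iconj[OF phiP[OF uQ] dc])
              show "h2 (act u w) = h2 w" unfolding h2_def e1 e2 e3 cact[OF uQ w] ..
            qed
            also have "\<dots> = 0"
            proof (rule sum.neutral, rule ballI)
              fix w assume "w \<in> {w\<in>carrier G. \<forall>u\<in>carrier H. act u w = w}"
              hence "w \<in> T" using Hc by (simp add: T_def)
              hence "inv w \<otimes> z \<in> C'" using TC3 True by blast
              thus "h2 w = 0" by (simp add: h2_def)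
            qed
            finally show ?thesis .
          qed
          have "cT z = c z" using True by (simp add: cT_def)
          also have "\<dots> = conv G c i z" using ci_eq by simp
          also have "\<dots> = (\<Sum>w\<in>carrier G. c w * i (inv w \<otimes> z))" using z by (simp add: conv_eval)
          also have "\<dots> = (\<Sum>w\<in>carrier G. cT w * (if inv w \<otimes> z \<in> C' then i (inv w \<otimes> z) else 0)) + (\<Sum>w\<in>carrier G. h2 w)"
            using split by (simp add: sum.distrib)
          also have "\<dots> = conv G cT (brauer G R' i) z" using h2sum ev by simp
          finally show ?thesis by simp
        qed
      qed
    qed
    have W: "conv G cT (delta x) \<in> galg G C"
      unfolding galg_def
    proof (intro CollectI allI impI)
      fix z assume zC: "z \<notin> C"
      show "conv G cT (delta x) z = 0"
      proof (cases "z \<in> carrier G")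
        case False thus ?thesis by (simp add: conv_out)
      next
        case z: True
        have "z \<otimes> y0 \<notin> T"
        proof
          assume "z \<otimes> y0 \<in> T"
          hence "z \<otimes> y0 \<otimes> inv y0 \<in> C" by (rule TC4)
          thus False using zC z y0c by (simp add: m_assoc)
        qed
        thus ?thesis using z xc y0c by (simp add: conv_delta_right x_def cT_def)
      qed
    qed
    have Ceq: "conv G cT e' = conv G e cT"
    proof -
      have "conv G cT e' = conv G (conv G (conv G cT (delta x)) e) (delta (inv x))"
        by (simp add: e'_def gconj_def conv_assoc)
      also have "\<dots> = conv G (conv G e (conv G cT (delta x))) (delta (inv x))"
        using center_comm[OF ec W] by simp
      also have "\<dots> = conv G e (conv G cT (conv G (delta x) (delta (inv x))))" by (simp add: conv_assoc)
      also have "\<dots> = conv G e cT" using xc cTsup by (simp add: delta_mult unit_right)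
      finally show ?thesis .
    qed
    have "cT = conv G cT e'" using A Ceq by simp
    also have "\<dots> = conv G (conv G cT (brauer G R' i)) e'" using B by simp
    also have "\<dots> = conv G cT (conv G a' (conv G (eQ G i R') e'))" by (simp add: Bi' conv_assoc)
    also have "\<dots> = gzero" using orth by (simp add: conv_zero_right)
    finally have "cT y0 = 0" by (simp add: gzero_def)
    thus False using y0T cy0 by (simp add: cT_def)
  qed
  show ?thesis unfolding fusion_hom_def
  proof (intro conjI)
    show "\<forall>u\<in>Q. \<phi> u \<in> R" using phiR by blast
    show "\<forall>u\<in>Q. \<forall>v\<in>Q. \<phi> (u \<otimes> v) = \<phi> u \<otimes> \<phi> v" using phimul by blast
    show "\<exists>x\<in>carrier G. (\<forall>u\<in>Q. \<phi> u = x \<otimes> u \<otimes> inv x) \<and>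
        gconj G x (eQ G i Q) = eQ G i ((\<lambda>u. x \<otimes> u \<otimes> inv x) ` Q)"
    proof (intro bexI conjI ballI)
      show "x \<in> carrier G" by (rule xc)
      show "\<And>u. u \<in> Q \<Longrightarrow> \<phi> u = x \<otimes> u \<otimes> inv x" by (rule phix)
      show "gconj G x (eQ G i Q) = eQ G i ((\<lambda>u. x \<otimes> u \<otimes> inv x) ` Q)"
        using eEQ \<open>e' = eQ G i R'\<close> by (simp add: e'_def R'_def conjset_def)
    qed
  qed
qed

end

theorem proposition2p6:
  fixes G :: "('g,'b) monoid_scheme" and p :: nat
    and b i e :: "'g \<Rightarrow> 'k::field" and P Q R :: "'g set" and \<phi> :: "'g \<Rightarrow> 'g"
  assumes "group G" and "finite (carrier G)"
    and "Factorial_Ring.prime p" and "CHAR('k) = p"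
    and "splitting_field_for G (carrier G) TYPE('k)"
    and "\<forall>Q'. subgroup Q' G \<and> Q' \<subseteq> P \<longrightarrow> splitting_field_for G (centr G Q') TYPE('k)"
    and "is_block G (carrier G) b"
    and "defect_group G p b P"
    and "almost_source G b P i"
    and "subgroup Q G" and "Q \<subseteq> P" and "subgroup R G" and "R \<subseteq> P"
    and "is_block G (centr G Q) e" and "conv G (brauer G Q i) e \<noteq> gzero"
    and "\<forall>u \<in> Q. \<phi> u \<in> R"
    and "\<forall>u \<in> Q. \<forall>v \<in> Q. \<phi> (u \<otimes>\<^bsub>G\<^esub> v) = \<phi> u \<otimes>\<^bsub>G\<^esub> \<phi> v"
    and "inj_on \<phi> Q"
    and "bimod_summand G Q R \<phi> (galg G R) id
           {conv G (conv G e a) i | a. a \<in> galg G (carrier G)}"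
  shows "fusion_hom G i Q R \<phi>"
proof -
  interpret fgrp G using assms(1,2) by (simp add: fgrp_def fgrp_axioms_def)
  show ?thesis by (rule main[OF assms(1-4) TrueI TrueI TrueI assms(8-17) TrueI assms(19)])
qed

end
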